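(* Let $r\ge 2$, $d\in\{1,\dots,r-1\}$, let $M\in\mathrm{rep}(K_r)$ and $\mathfrak v\in\mathrm{Gr}_d(A_r)$. The following statements are equivalent: (1) $\mathrm{Hom}_{K_r}(E(\mathfrak v),M)=(0)$. (2) For every injective linear map $\alpha:A_d\to A_r$ with $\mathrm{im}\,\alpha=\mathfrak v$, the map $\psi_{\alpha^*(M)}:A_d\otimes_k M_1\to M_2$ is injective. (3) There is an injective linear map $\alpha:A_d\to A_r$ with $\mathrm{im}\,\alpha=\mathfrak v$ such that $\psi_{\alpha^*(M)}$ is injective. (4) There is an injective linear map $\alpha:A_d\to A_r$ with $\mathrm{im}\,\alpha=\mathfrak v$ such that $\alpha^*(M)\cong \Delta_M(d)\,P_0(d)\oplus(\dim_k M_1)\,P_1(d)$. (5) $\mathfrak v\notin\mathcal V(K_r,d)_M$.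
   Context: $k$ is an algebraically closed field of arbitrary characteristic; all vector spaces are finite-dimensional. For $n\ge1$, $K_n$ is the Kronecker quiver with vertices $1,2$ and $n$ arrows $\gamma_1,\dots,\gamma_n:1\to2$; a representation $M=(M_1,M_2,(M(\gamma_i))_{i})$ consists of vector spaces $M_1,M_2$ and linear maps $M(\gamma_i):M_1\to M_2$; $\mathrm{rep}(K_n)$ is the category of such representations. $A_n=\bigoplus_{i=1}^n k\gamma_i$ is the arrow space and $\psi_M:A_n\otimes_k M_1\to M_2$ is the linear map with $\psi_M(\gamma_i\otimes m)=M(\gamma_i)(m)$. For an injective linear map $\alpha:A_d\to A_r$ and $M\in\mathrm{rep}(K_r)$, the pull-back $\alpha^*(M)\in\mathrm{rep}(K_d)$ has spaces $(M_1,M_2)$ and $\alpha^*(M)(\gamma_j)=\psi_M(\alpha(\gamma_j)\otimes -)$. $\Delta_M(d)=\dim_k M_2-d\dim_k M_1$. $P_0(d)=(0,k)$ is the simple projective representation of $K_d$, and $P_1(d)=(k,A_d)$ with $P_1(d)(\gamma_i)(\lambda)=\lambda\gamma_i$ is the projective cover of the simple representation $(k,0)$. $\mathrm{Gr}_d(A_r)$ is the Grassmannian of $d$-dimensional subspaces of $A_r$. The $d$-th rank variety $\mathcal V(K_r,d)_M$ is the set of $\mathfrak v\in\mathrm{Gr}_d(A_r)$ for which there exists an injective $\alpha:A_d\to A_r$ with $\mathrm{im}\,\alpha=\mathfrak v$ such that $\alpha^*(M)$ is not projective. For $\mathfrak v\in\mathrm{Gr}_d(A_r)$ let $C(\mathfrak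 v)=(k,A_r/\mathfrak v)$ with $C(\mathfrak v)(\gamma_i)(\lambda)=\lambda\gamma_i+\mathfrak v$; let $D_{K_r}$ be the standard duality $D_{K_r}(M)=(M_2^*,M_1^*,(M(\gamma_i)^* )_i)$ and $\tau_{K_r}$ the Auslander–Reiten translation of $\mathrm{rep}(K_r)$. Then $E(\mathfrak v):=D_{K_r}(\tau_{K_r}(C(\mathfrak v)))$. *)

theory Defs
  imports Main "HOL-Library.Function_Algebras" "HOL-Computational_Algebra.Polynomial"
begin

text \<open>The field k is a type of class field; algebraic closedness is an explicit hypothesis.\<close>
definition alg_closed :: "'k::field itself \<Rightarrow> bool" where
  "alg_closed _ \<longleftrightarrow> (\<forall>p :: 'k poly. 0 < degree p \<longrightarrow> (\<exists>x. poly p x = 0))"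

text \<open>All vector spaces are realised as subspaces of a function space 'i => 'k
  with pointwise operations (every finite-dimensional space is of this form).\<close>
definition fscale :: "'k::field \<Rightarrow> ('i \<Rightarrow> 'k) \<Rightarrow> ('i \<Rightarrow> 'k)" where
  "fscale c f = (\<lambda>x. c * f x)"

lemma vector_space_fscale: "vector_space (fscale :: 'k::field \<Rightarrow> ('i \<Rightarrow> 'k) \<Rightarrow> _)"
  by unfold_locales (auto simp: fscale_def fun_eq_iff algebra_simps)

abbreviation fsubspace :: "('i \<Rightarrow> 'k::field) set \<Rightarrow> bool" where
  "fsubspace V \<equiv> module.subspace fscale V"

abbreviation fdim :: "('i \<Rightarrow> 'k::field) set \<Rightarrow> nat" where
  "fdim V \<equiv> vector_space.dim fscale V"

definition fin_dim_subspace :: "('i \<Rightarrow> 'k::field) set \<Rightarrow> bool" where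
  "fin_dim_subspace V \<longleftrightarrow> fsubspace V \<and> (\<exists>B. finite B \<and> B \<subseteq> V \<and> module.span fscale B = V)"

definition lin_on :: "('i \<Rightarrow> 'k::field) set \<Rightarrow> ('j \<Rightarrow> 'k) set \<Rightarrow> (('i \<Rightarrow> 'k) \<Rightarrow> ('j \<Rightarrow> 'k)) \<Rightarrow> bool" where
  "lin_on V W f \<longleftrightarrow> (\<forall>x\<in>V. f x \<in> W) \<and> (\<forall>x\<in>V. \<forall>y\<in>V. f (x + y) = f x + f y)
     \<and> (\<forall>c. \<forall>x\<in>V. f (fscale c x) = fscale c (f x))"

text \<open>Dual space V^* of V, realised extensionally (functionals vanish outside V).\<close>
definition dual_sp :: "('i \<Rightarrow> 'k::field) set \<Rightarrow> ((('i \<Rightarrow> 'k)) \<Rightarrow> 'k) set" where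
  "dual_sp V = {\<phi>. lin_on V (UNIV :: (unit \<Rightarrow> 'k) set) (\<lambda>x u. \<phi> x) \<and> (\<forall>x. x \<notin> V \<longrightarrow> \<phi> x = 0)}"

definition arrsp :: "nat \<Rightarrow> (nat \<Rightarrow> 'k::field) set" where
  "arrsp n = {a. \<forall>j\<ge>n. a j = 0}"

definition gam :: "nat \<Rightarrow> (nat \<Rightarrow> 'k::field)" where
  "gam i = (\<lambda>j. if j = i then 1 else 0)"

definition Gr :: "nat \<Rightarrow> nat \<Rightarrow> (nat \<Rightarrow> 'k::field) set set" where
  "Gr d r = {v. fsubspace v \<and> v \<subseteq> arrsp r \<and> fdim v = d}"

definition inj_arr :: "nat \<Rightarrow> nat \<Rightarrow> ((nat \<Rightarrow> 'k::field) \<Rightarrow> (nat \<Rightarrow> 'k)) \<Rightarrow> bool" where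
  "inj_arr d r \<alpha> \<longleftrightarrow> lin_on (arrsp d) (arrsp r) \<alpha> \<and> inj_on \<alpha> (arrsp d)"

text \<open>A representation: spaces M_1, M_2 and maps M(gamma_i) for the arrows i < n
  (arrows indexed 0, ..., n-1).\<close>
record ('i, 'j, 'k) krep =
  sp1 :: "('i \<Rightarrow> 'k) set"
  sp2 :: "('j \<Rightarrow> 'k) set"
  arr :: "nat \<Rightarrow> ('i \<Rightarrow> 'k) \<Rightarrow> ('j \<Rightarrow> 'k)"

definition is_rep :: "nat \<Rightarrow> ('i, 'j, 'k::field) krep \<Rightarrow> bool" where
  "is_rep n M \<longleftrightarrow> fin_dim_subspace (sp1 M) \<and> fin_dim_subspace (sp2 M)
     \<and> (\<forall>i<n. lin_on (sp1 M) (sp2 M) (arr M i))"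

definition is_hom :: "nat \<Rightarrow> ('i, 'j, 'k::field) krep \<Rightarrow> ('i2, 'j2, 'k) krep
     \<Rightarrow> (('i \<Rightarrow> 'k) \<Rightarrow> ('i2 \<Rightarrow> 'k)) \<Rightarrow> (('j \<Rightarrow> 'k) \<Rightarrow> ('j2 \<Rightarrow> 'k)) \<Rightarrow> bool" where
  "is_hom n M N f1 f2 \<longleftrightarrow> lin_on (sp1 M) (sp1 N) f1 \<and> lin_on (sp2 M) (sp2 N) f2
     \<and> (\<forall>i<n. \<forall>x\<in>sp1 M. f2 (arr M i x) = arr N i (f1 x))"

definition hom_zero :: "nat \<Rightarrow> ('i, 'j, 'k::field) krep \<Rightarrow> ('i2, 'j2, 'k) krep \<Rightarrow> bool" where
  "hom_zero n M N \<longleftrightarrow> (\<forall>f1 f2. is_hom n M N f1 f2 \<longrightarrow>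
      (\<forall>x\<in>sp1 M. f1 x = 0) \<and> (\<forall>y\<in>sp2 M. f2 y = 0))"

definition is_iso :: "nat \<Rightarrow> ('i, 'j, 'k::field) krep \<Rightarrow> ('i2, 'j2, 'k) krep \<Rightarrow> bool" where
  "is_iso n M N \<longleftrightarrow> (\<exists>f1 f2. is_hom n M N f1 f2 \<and> bij_betw f1 (sp1 M) (sp1 N)
      \<and> bij_betw f2 (sp2 M) (sp2 N))"

text \<open>Test objects range over representations
  with nat-indexed coordinate spaces, which up to isomorphism are all objects.\<close>
definition projective_rep :: "nat \<Rightarrow> ('i, 'j, 'k::field) krep \<Rightarrow> bool" where
  "projective_rep n P \<longleftrightarrow> (\<forall>(X :: (nat, nat, 'k) krep) (Y :: (nat, nat, 'k) krep) g1 g2 h1 h2.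
      is_rep n X \<and> is_rep n Y \<and> is_hom n X Y g1 g2 \<and> g1 ` sp1 X = sp1 Y \<and> g2 ` sp2 X = sp2 Y
      \<and> is_hom n P Y h1 h2 \<longrightarrow>
      (\<exists>f1 f2. is_hom n P X f1 f2 \<and> (\<forall>x\<in>sp1 P. g1 (f1 x) = h1 x) \<and> (\<forall>y\<in>sp2 P. g2 (f2 y) = h2 y)))"

definition dsum :: "('i1, 'j1, 'k::field) krep \<Rightarrow> ('i2, 'j2, 'k) krep \<Rightarrow> ('i1 + 'i2, 'j1 + 'j2, 'k) krep" where
  "dsum M N = \<lparr> sp1 = {f. (f \<circ> Inl) \<in> sp1 M \<and> (f \<circ> Inr) \<in> sp1 N},
                sp2 = {g. (g \<circ> Inl) \<in> sp2 M \<and> (g \<circ> Inr) \<in> sp2 N},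
                arr = (\<lambda>i f z. case z of Inl x \<Rightarrow> arr M i (f \<circ> Inl) x | Inr y \<Rightarrow> arr N i (f \<circ> Inr) y) \<rparr>"

definition mult_rep :: "nat \<Rightarrow> ('i, 'j, 'k::field) krep \<Rightarrow> (nat \<times> 'i, nat \<times> 'j, 'k) krep" where
  "mult_rep m M = \<lparr> sp1 = {f. \<forall>l. (if l < m then (\<lambda>x. f (l, x)) \<in> sp1 M else (\<lambda>x. f (l, x)) = 0)},
                   sp2 = {g. \<forall>l. (if l < m then (\<lambda>y. g (l, y)) \<in> sp2 M else (\<lambda>y. g (l, y)) = 0)},
                   arr = (\<lambda>i f (l, y). if l < m then arr M i (\<lambda>x. f (l, x)) y else 0) \<rparr>"

definition P0 :: "(unit, unit, 'k::field) krep" where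
  "P0 = \<lparr> sp1 = {0}, sp2 = UNIV, arr = (\<lambda>i x. 0) \<rparr>"

definition P1 :: "nat \<Rightarrow> (unit, nat, 'k::field) krep" where
  "P1 d = \<lparr> sp1 = UNIV, sp2 = arrsp d, arr = (\<lambda>i x. fscale (x ()) (gam i)) \<rparr>"

text \<open>A_n (x) M_1 is identified with M_1^n via the basis gamma_0..gamma_(n-1):
  the tuple (m_j)_j corresponds to sum_j gamma_j (x) m_j; psi_M sends it to sum_j M(gamma_j) m_j.\<close>
definition tensor_sp :: "nat \<Rightarrow> ('i \<Rightarrow> 'k::field) set \<Rightarrow> (nat \<times> 'i \<Rightarrow> 'k) set" where
  "tensor_sp n V = {f. \<forall>l. (if l < n then (\<lambda>x. f (l, x)) \<in> V else (\<lambda>x. f (l, x)) = 0)}"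

definition psi :: "nat \<Rightarrow> ('i, 'j, 'k::field) krep \<Rightarrow> (nat \<times> 'i \<Rightarrow> 'k) \<Rightarrow> ('j \<Rightarrow> 'k)" where
  "psi n M f = (\<Sum>l<n. arr M l (\<lambda>x. f (l, x)))"

definition psi_injective :: "nat \<Rightarrow> ('i, 'j, 'k::field) krep \<Rightarrow> bool" where
  "psi_injective n M \<longleftrightarrow> inj_on (psi n M) (tensor_sp n (sp1 M))"

text \<open>Pull-back alpha^*(M) in rep(K_d): alpha^*(M)(gamma_j) = psi_M(alpha(gamma_j) (x) -),
  i.e. sum_i alpha(gamma_j)_i M(gamma_i).\<close>
definition pullback :: "nat \<Rightarrow> ((nat \<Rightarrow> 'k::field) \<Rightarrow> (nat \<Rightarrow> 'k)) \<Rightarrow> ('i, 'j, 'k) krep \<Rightarrow> ('i, 'j, 'k) krep" where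
  "pullback r \<alpha> M = \<lparr> sp1 = sp1 M, sp2 = sp2 M,
      arr = (\<lambda>j m. \<Sum>i<r. fscale (\<alpha> (gam j) i) (arr M i m)) \<rparr>"

definition Delta :: "('i, 'j, 'k::field) krep \<Rightarrow> nat \<Rightarrow> int" where
  "Delta M d = int (fdim (sp2 M)) - int d * int (fdim (sp1 M))"

definition rank_variety :: "nat \<Rightarrow> nat \<Rightarrow> ('i, 'j, 'k::field) krep \<Rightarrow> (nat \<Rightarrow> 'k) set set" where
  "rank_variety r d M = {v \<in> Gr d r. \<exists>\<alpha>. inj_arr d r \<alpha> \<and> \<alpha> ` arrsp d = v
      \<and> \<not> projective_rep d (pullback r \<alpha> M)}"

text \<open>The quotient A_r / v is realised via its canonical isomorphism with the dual of the
  annihilator of v: the coset a + v corresponds to (phi |-> phi(a)) on ann(v).\<close>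
definition annih :: "nat \<Rightarrow> (nat \<Rightarrow> 'k::field) set \<Rightarrow> ((nat \<Rightarrow> 'k) \<Rightarrow> 'k) set" where
  "annih r v = {\<phi> \<in> dual_sp (arrsp r). \<forall>x\<in>v. \<phi> x = 0}"

definition quot_proj :: "nat \<Rightarrow> (nat \<Rightarrow> 'k::field) set \<Rightarrow> (nat \<Rightarrow> 'k) \<Rightarrow> (((nat \<Rightarrow> 'k) \<Rightarrow> 'k) \<Rightarrow> 'k)" where
  "quot_proj r v a = (\<lambda>\<phi>. if \<phi> \<in> annih r v then \<phi> a else 0)"

definition Crep :: "nat \<Rightarrow> (nat \<Rightarrow> 'k::field) set \<Rightarrow> (unit, (nat \<Rightarrow> 'k) \<Rightarrow> 'k, 'k) krep" where
  "Crep r v = \<lparr> sp1 = UNIV, sp2 = quot_proj r v ` arrsp r,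
      arr = (\<lambda>i x. quot_proj r v (fscale (x ()) (gam i))) \<rparr>"

definition Dual :: "('i, 'j, 'k::field) krep \<Rightarrow> ('j \<Rightarrow> 'k, 'i \<Rightarrow> 'k, 'k) krep" where
  "Dual M = \<lparr> sp1 = dual_sp (sp2 M), sp2 = dual_sp (sp1 M),
      arr = (\<lambda>i \<phi> x. if x \<in> sp1 M then \<phi> (arr M i x) else 0) \<rparr>"

text \<open>Shift functor sigma_{K_r} (BGP reflection at the sink followed by relabelling):
  sigma(M) = (ker psi_M, M_1), sigma(M)(gamma_i)(sum_j gamma_j (x) m_j) = m_i.\<close>
definition shift :: "nat \<Rightarrow> ('i, 'j, 'k::field) krep \<Rightarrow> (nat \<times> 'i, 'i, 'k) krep" where
  "shift r M = \<lparr> sp1 = {f \<in> tensor_sp r (sp1 M). psi r M f = 0}, sp2 = sp1 M,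
      arr = (\<lambda>i f x. f (i, x)) \<rparr>"

text \<open>Auslander-Reiten translation of rep(K_r), given by the Coxeter functor tau = sigma^2.\<close>
definition tau :: "nat \<Rightarrow> ('i, 'j, 'k::field) krep \<Rightarrow> (nat \<times> (nat \<times> 'i), nat \<times> 'i, 'k) krep" where
  "tau r M = shift r (shift r M)"

definition Erep :: "nat \<Rightarrow> (nat \<Rightarrow> 'k::field) set
     \<Rightarrow> (nat \<times> unit \<Rightarrow> 'k, nat \<times> (nat \<times> unit) \<Rightarrow> 'k, 'k) krep" where
  "Erep r v = Dual (tau r (Crep r v))"

end

theory Submission
  imports Defs
begin

interpretation FS: vector_space "fscale :: 'k::field \<Rightarrow> ('i \<Rightarrow> 'k) \<Rightarrow> ('i \<Rightarrow> 'k)"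
  by (rule vector_space_fscale)

lemma sum_fun_apply: "(sum f A) x = sum (\<lambda>a. f a x) A"
  by (induction A rule: infinite_finite_induct) auto

lemma fscale_apply[simp]: "fscale c f x = c * f x"
  by (simp add: fscale_def)

lemma fscale_zero_left[simp]: "fscale 0 f = 0" and fscale_zero_right[simp]: "fscale c 0 = 0"
  and fscale_one[simp]: "fscale 1 f = f"
  by (auto simp: fscale_def fun_eq_iff)

definition lc :: "'z set \<Rightarrow> ('z \<Rightarrow> 'k::field) \<Rightarrow> ('z \<Rightarrow> ('i \<Rightarrow> 'k)) \<Rightarrow> ('i \<Rightarrow> 'k)" where
  "lc I c e = (\<Sum>z\<in>I. fscale (c z) (e z))"

definition iindep :: "'z set \<Rightarrow> ('z \<Rightarrow> ('i \<Rightarrow> 'k::field)) \<Rightarrow> bool" where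
  "iindep I e \<longleftrightarrow> (\<forall>c. lc I c e = 0 \<longrightarrow> (\<forall>z\<in>I. c z = 0))"

definition ibasis :: "('i \<Rightarrow> 'k::field) set \<Rightarrow> 'z set \<Rightarrow> ('z \<Rightarrow> ('i \<Rightarrow> 'k)) \<Rightarrow> bool" where
  "ibasis V I e \<longleftrightarrow> finite I \<and> e ` I \<subseteq> V \<and> (\<forall>x\<in>V. \<exists>c. x = lc I c e) \<and> iindep I e"

lemma lc_cong: "(\<And>z. z \<in> I \<Longrightarrow> c z = c' z) \<Longrightarrow> lc I c e = lc I c' e"
  unfolding lc_def by (rule sum.cong) auto

lemma lc_add: "lc I (\<lambda>z. c z + c' z) e = lc I c e + lc I c' e"
  unfolding lc_def by (simp add: FS.scale_left_distrib sum.distrib)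

lemma lc_diff: "lc I (\<lambda>z. c z - c' z) e = lc I c e - lc I c' e"
  unfolding lc_def by (simp add: FS.scale_left_diff_distrib sum_subtractf)

lemma lc_scale: "lc I (\<lambda>z. a * c z) e = fscale a (lc I c e)"
  unfolding lc_def by (simp add: FS.scale_sum_right FS.scale_scale)

lemma lc_in_subspace: "fsubspace W \<Longrightarrow> e ` I \<subseteq> W \<Longrightarrow> lc I c e \<in> W"
  unfolding lc_def by (intro FS.subspace_sum FS.subspace_scale) auto

lemma iindep_unique:
  assumes "iindep I e" "lc I c e = lc I c' e" "z \<in> I"
  shows "c z = c' z"
proof -
  have "lc I (\<lambda>z. c z - c' z) e = 0" using assms(2) by (simp add: lc_diff)
  then show ?thesis using assms(1,3) unfolding iindep_def by force
qed

lemma lc_delta: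
  assumes "finite I" "z0 \<in> I"
  shows "lc I (\<lambda>z. if z = z0 then 1 else 0) e = e z0"
proof -
  have "lc I (\<lambda>z. if z = z0 then 1 else 0) e = (\<Sum>z\<in>I. if z = z0 then e z else 0)"
    unfolding lc_def by (rule sum.cong) auto
  also have "\<dots> = e z0" using assms by (simp add: sum.delta')
  finally show ?thesis .
qed

lemma lin_on_0:
  assumes "lin_on V W f" "fsubspace V"
  shows "f 0 = 0"
proof -
  have "0 \<in> V" using assms(2) by (rule FS.subspace_0)
  then have "f (0 + 0) = f 0 + f 0" using assms(1) unfolding lin_on_def by blast
  then show ?thesis by simp
qed

lemma lin_on_scale: "lin_on V W f \<Longrightarrow> x \<in> V \<Longrightarrow> f (fscale c x) = fscale c (f x)"
  unfolding lin_on_def by blast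

lemma lin_on_add: "lin_on V W f \<Longrightarrow> x \<in> V \<Longrightarrow> y \<in> V \<Longrightarrow> f (x + y) = f x + f y"
  unfolding lin_on_def by blast

lemma lin_on_in: "lin_on V W f \<Longrightarrow> x \<in> V \<Longrightarrow> f x \<in> W"
  unfolding lin_on_def by blast

lemma lin_on_sum:
  assumes "lin_on V W f" "fsubspace V" "\<And>z. z \<in> I \<Longrightarrow> x z \<in> V"
  shows "f (\<Sum>z\<in>I. x z) = (\<Sum>z\<in>I. f (x z))"
  using assms(3)
proof (induction I rule: infinite_finite_induct)
  case (infinite A) then show ?case using lin_on_0[OF assms(1,2)] by (metis sum.infinite)
next
  case empty then show ?case using lin_on_0[OF assms(1,2)] by (simp only: sum.empty)
next
  case (insert a A)
  have sV: "(\<Sum>z\<in>A. x z) \<in> V" using insert.prems by (intro FS.subspace_sum[OF assms(2)]) auto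
  have "f (\<Sum>z\<in>insert a A. x z) = f (x a + (\<Sum>z\<in>A. x z))" by (simp only: sum.insert[OF insert.hyps])
  also have "\<dots> = f (x a) + f (\<Sum>z\<in>A. x z)" using lin_on_add[OF assms(1) _ sV] insert.prems by blast
  also have "\<dots> = f (x a) + (\<Sum>z\<in>A. f (x z))" using insert.IH insert.prems by simp
  also have "\<dots> = (\<Sum>z\<in>insert a A. f (x z))" by (simp only: sum.insert[OF insert.hyps])
  finally show ?case .
qed

lemma fscale_m1: "fscale (-1) u = - u"
  by (auto simp: fscale_def fun_eq_iff)

lemma lin_on_neg:
  assumes "lin_on V W f" "fsubspace V" "x \<in> V" shows "f (- x) = - f x"
proof -
  have "f (- x) = f (fscale (-1) x)" by (simp only: fscale_m1)
  also have "\<dots> = fscale (-1) (f x)" using assms(1,3) by (rule lin_on_scale)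
  also have "\<dots> = - f x" by (simp only: fscale_m1)
  finally show ?thesis .
qed

lemma lin_on_diff:
  assumes "lin_on V W f" "fsubspace V" "x \<in> V" "y \<in> V" shows "f (x - y) = f x - f y"
proof -
  have "- y \<in> V" using assms by (simp add: FS.subspace_neg)
  then have "f (x + - y) = f x + f (- y)" using assms lin_on_add by blast
  then show ?thesis using lin_on_neg[OF assms(1,2,4)] by simp
qed

lemma lin_on_lc:
  assumes "lin_on V W f" "fsubspace V" "e ` I \<subseteq> V"
  shows "f (lc I c e) = lc I c (\<lambda>z. f (e z))"
  unfolding lc_def using assms
  by (subst lin_on_sum[OF assms(1,2)]) (auto intro!: sum.cong FS.subspace_scale lin_on_scale)

lemma lin_on_compose: "lin_on U V f \<Longrightarrow> lin_on V W g \<Longrightarrow> lin_on U W (g \<circ> f)"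
  unfolding lin_on_def by auto

lemma lin_on_inj_iff:
  assumes "lin_on V W f" "fsubspace V"
  shows "inj_on f V \<longleftrightarrow> (\<forall>x\<in>V. f x = 0 \<longrightarrow> x = 0)"
proof
  assume inj: "inj_on f V"
  show "\<forall>x\<in>V. f x = 0 \<longrightarrow> x = 0"
  proof (intro ballI impI)
    fix x assume "x \<in> V" "f x = 0"
    then have "f x = f 0" using lin_on_0[OF assms] by metis
    then show "x = 0" by (rule inj_onD[OF inj _ \<open>x \<in> V\<close> FS.subspace_0[OF assms(2)]])
  qed
next
  assume H: "\<forall>x\<in>V. f x = 0 \<longrightarrow> x = 0"
  show "inj_on f V"
  proof (rule inj_onI)
    fix x y assume "x \<in> V" "y \<in> V" "f x = f y"
    then have "f (x - y) = 0" using lin_on_diff[OF assms] by simp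
    moreover have "x - y \<in> V" using \<open>x \<in> V\<close> \<open>y \<in> V\<close> FS.subspace_diff[OF assms(2)] by blast
    ultimately have "x - y = 0" using H by blast
    then show "x = y" by simp
  qed
qed

lemma ibasis_agree:
  assumes "ibasis V I e" "fsubspace V" "lin_on V W f" "lin_on V W' g"
    "\<And>z. z \<in> I \<Longrightarrow> f (e z) = g (e z)" "x \<in> V"
  shows "f x = g x"
proof -
  obtain c where c: "x = lc I c e" using assms(1,6) unfolding ibasis_def by blast
  have eI: "e ` I \<subseteq> V" using assms(1) unfolding ibasis_def by blast
  have "f x = lc I c (\<lambda>z. f (e z))" using c lin_on_lc[OF assms(3,2) eI] by simp
  also have "\<dots> = lc I c (\<lambda>z. g (e z))" unfolding lc_def using assms(5) by (auto intro!: sum.cong)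
  also have "\<dots> = g x" using c lin_on_lc[OF assms(4,2) eI] by simp
  finally show ?thesis .
qed

definition coords :: "'z set \<Rightarrow> ('z \<Rightarrow> ('i \<Rightarrow> 'k::field)) \<Rightarrow> ('i \<Rightarrow> 'k) \<Rightarrow> ('z \<Rightarrow> 'k)" where
  "coords I e x = (SOME c. x = lc I c e)"

lemma coords_lc:
  assumes "ibasis V I e" "x \<in> V" shows "x = lc I (coords I e x) e"
proof -
  obtain c where "x = lc I c e" using assms unfolding ibasis_def by blast
  then show ?thesis unfolding coords_def by (rule someI[where P="\<lambda>c. x = lc I c e"])
qed

lemma coords_of_lc:
  assumes "ibasis V I e" "fsubspace V" "z \<in> I"
  shows "coords I e (lc I c e) z = c z"
proof -
  have "lc I c e \<in> V" using assms lc_in_subspace unfolding ibasis_def by blast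
  then have "lc I (coords I e (lc I c e)) e = lc I c e" by (rule coords_lc[OF assms(1), symmetric])
  moreover have "iindep I e" using assms(1) unfolding ibasis_def by blast
  ultimately show ?thesis using iindep_unique assms(3) by metis
qed

lemma ibasis_linext:
  assumes "ibasis V I e" "fsubspace V" "fsubspace W" "\<And>z. z \<in> I \<Longrightarrow> t z \<in> W"
  shows "\<exists>f. lin_on V W f \<and> (\<forall>z\<in>I. f (e z) = t z)"
proof -
  define f where "f x = lc I (coords I e x) t" for x
  have fin: "finite I" and eI: "e ` I \<subseteq> V" using assms(1) unfolding ibasis_def by auto
  have ind: "iindep I e" using assms(1) unfolding ibasis_def by auto
  have add: "coords I e (x + y) z = coords I e x z + coords I e y z" if "x \<in> V" "y \<in> V" "z \<in> I" for x y z
  proof -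
    have "x + y \<in> V" using that FS.subspace_add[OF assms(2)] by blast
    then have "lc I (coords I e (x + y)) e = x + y"
      by (rule coords_lc[OF assms(1), symmetric])
    also have "\<dots> = lc I (coords I e x) e + lc I (coords I e y) e"
      using coords_lc[OF assms(1) that(1)] coords_lc[OF assms(1) that(2)] by argo
    also have "\<dots> = lc I (\<lambda>z. coords I e x z + coords I e y z) e"
      by (rule lc_add[symmetric])
    finally show ?thesis by (rule iindep_unique[OF ind _ that(3)])
  qed
  have scl: "coords I e (fscale a x) z = a * coords I e x z" if "x \<in> V" "z \<in> I" for a x z
  proof -
    have "fscale a x \<in> V" using that FS.subspace_scale[OF assms(2)] by blast
    then have "lc I (coords I e (fscale a x)) e = fscale a x"
      by (rule coords_lc[OF assms(1), symmetric])
    also have "\<dots> = fscale a (lc I (coords I e x) e)"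
      using coords_lc[OF assms(1) that(1)] by argo
    also have "\<dots> = lc I (\<lambda>z. a * coords I e x z) e"
      by (rule lc_scale[symmetric])
    finally show ?thesis by (rule iindep_unique[OF ind _ that(2)])
  qed
  have "lin_on V W f"
    unfolding lin_on_def f_def
  proof (intro conjI ballI allI)
    fix x
    have "t ` I \<subseteq> W" using assms(4) by blast
    then show "lc I (coords I e x) t \<in> W" by (rule lc_in_subspace[OF assms(3)])
  next
    fix x y assume xy: "x \<in> V" "y \<in> V"
    have "lc I (coords I e (x + y)) t = lc I (\<lambda>z. coords I e x z + coords I e y z) t"
      by (rule lc_cong) (rule add[OF xy])
    also have "\<dots> = lc I (coords I e x) t + lc I (coords I e y) t" by (rule lc_add)
    finally show "lc I (coords I e (x + y)) t = lc I (coords I e x) t + lc I (coords I e y) t" .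
  next
    fix a x assume x: "x \<in> V"
    have "lc I (coords I e (fscale a x)) t = lc I (\<lambda>z. a * coords I e x z) t"
      by (rule lc_cong) (rule scl[OF x])
    also have "\<dots> = fscale a (lc I (coords I e x) t)" by (rule lc_scale)
    finally show "lc I (coords I e (fscale a x)) t = fscale a (lc I (coords I e x) t)" .
  qed
  moreover have "f (e z) = t z" if zI: "z \<in> I" for z
  proof -
    have "coords I e (e z) z' = (if z' = z then 1 else 0)" if z': "z' \<in> I" for z'
    proof -
      have "coords I e (e z) z' = coords I e (lc I (\<lambda>z'. if z' = z then 1 else 0) e) z'"
        by (simp only: lc_delta[OF fin zI])
      also have "\<dots> = (if z' = z then 1 else 0)" by (rule coords_of_lc[OF assms(1,2) z'])
      finally show ?thesis .
    qed
    then have "f (e z) = lc I (\<lambda>z'. if z' = z then 1 else 0) t"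
      unfolding f_def by (rule lc_cong)
    then show ?thesis by (simp only: lc_delta[OF fin zI])
  qed
  ultimately show ?thesis by blast
qed

lemma ibasis_bij:
  assumes "ibasis V I e" "fsubspace V"
  shows "bij_betw (\<lambda>c. lc I c e) {c. \<forall>z. z \<notin> I \<longrightarrow> c z = 0} V"
proof -
  have ind: "iindep I e" and eI: "e ` I \<subseteq> V" using assms unfolding ibasis_def by auto
  show ?thesis
  unfolding bij_betw_def
  proof (intro conjI)
    show "inj_on (\<lambda>c. lc I c e) {c. \<forall>z. z \<notin> I \<longrightarrow> c z = 0}"
    proof (rule inj_onI)
      fix c c' assume c: "c \<in> {c. \<forall>z. z \<notin> I \<longrightarrow> c z = 0}" and c': "c' \<in> {c. \<forall>z. z \<notin> I \<longrightarrow> c z = 0}"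
        and eq: "lc I c e = lc I c' e"
      show "c = c'"
      proof
        fix z show "c z = c' z"
        proof (cases "z \<in> I")
          case True then show ?thesis using iindep_unique[OF ind eq] by blast
        next
          case False then show ?thesis using c c' by simp
        qed
      qed
    qed
    show "(\<lambda>c. lc I c e) ` {c. \<forall>z. z \<notin> I \<longrightarrow> c z = 0} = V"
    proof
      show "(\<lambda>c. lc I c e) ` {c. \<forall>z. z \<notin> I \<longrightarrow> c z = 0} \<subseteq> V"
        using lc_in_subspace[OF assms(2) eI] by blast
    next
      show "V \<subseteq> (\<lambda>c. lc I c e) ` {c. \<forall>z. z \<notin> I \<longrightarrow> c z = 0}"
      proof
        fix x assume "x \<in> V"
        then obtain c where c: "x = lc I c e" using assms unfolding ibasis_def by blast
        let ?c = "\<lambda>z. if z \<in> I then c z else 0"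
        have "x = lc I ?c e" using c by (auto intro: lc_cong)
        then show "x \<in> (\<lambda>c. lc I c e) ` {c. \<forall>z. z \<notin> I \<longrightarrow> c z = 0}" by force
      qed
    qed
  qed
qed

lemma ibasis_reindex:
  assumes "ibasis V I e" "bij_betw \<sigma> I' I"
  shows "ibasis V I' (e \<circ> \<sigma>)"
proof -
  have lc: "lc I' c (e \<circ> \<sigma>) = lc I (c \<circ> inv_into I' \<sigma>) e" for c
  proof -
    have "lc I (c \<circ> inv_into I' \<sigma>) e = (\<Sum>z\<in>I'. (\<lambda>y. fscale ((c \<circ> inv_into I' \<sigma>) y) (e y)) (\<sigma> z))"
      unfolding lc_def by (rule sum.reindex_bij_betw[OF assms(2), symmetric])
    also have "\<dots> = lc I' c (e \<circ> \<sigma>)"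
      unfolding lc_def using assms(2) by (intro sum.cong refl) (simp add: bij_betw_inv_into_left)
    finally show ?thesis by simp
  qed
  have lc2: "lc I c e = lc I' (c \<circ> \<sigma>) (e \<circ> \<sigma>)" for c
  proof -
    have "lc I c e = (\<Sum>z\<in>I'. (\<lambda>y. fscale (c y) (e y)) (\<sigma> z))"
      unfolding lc_def by (rule sum.reindex_bij_betw[OF assms(2), symmetric])
    then show ?thesis unfolding lc_def by simp
  qed
  show ?thesis
    unfolding ibasis_def
  proof (intro conjI)
    show "finite I'" using assms bij_betw_finite unfolding ibasis_def by blast
    show "(e \<circ> \<sigma>) ` I' \<subseteq> V" using assms unfolding ibasis_def bij_betw_def by auto
    show "\<forall>x\<in>V. \<exists>c. x = lc I' c (e \<circ> \<sigma>)" using assms(1) lc2 unfolding ibasis_def by metis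
    show "iindep I' (e \<circ> \<sigma>)"
      unfolding iindep_def
    proof (intro allI impI ballI)
      fix c z assume "lc I' c (e \<circ> \<sigma>) = 0" "z \<in> I'"
      then have "lc I (c \<circ> inv_into I' \<sigma>) e = 0" using lc by simp
      moreover have "iindep I e" using assms(1) unfolding ibasis_def by blast
      moreover have "\<sigma> z \<in> I" using assms(2) \<open>z \<in> I'\<close> unfolding bij_betw_def by blast
      ultimately have "(c \<circ> inv_into I' \<sigma>) (\<sigma> z) = 0" unfolding iindep_def by blast
      then show "c z = 0" using assms(2) \<open>z \<in> I'\<close> by (simp add: bij_betw_inv_into_left)
    qed
  qed
qed


lemma iindep_inj:
  fixes e :: "'z \<Rightarrow> ('i \<Rightarrow> 'k::field)"
  assumes "iindep J e" "finite J"
  shows "inj_on e J"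
proof (rule inj_onI)
  fix z1 z2 assume z: "z1 \<in> J" "z2 \<in> J" "e z1 = e z2"
  show "z1 = z2"
  proof (rule ccontr)
    assume ne: "z1 \<noteq> z2"
    let ?c = "\<lambda>z. (if z = z1 then 1 else 0) - (if z = z2 then 1 else (0::'k))"
    have "lc J ?c e = lc J (\<lambda>z. if z = z1 then 1 else 0) e - lc J (\<lambda>z. if z = z2 then 1 else 0) e"
      by (rule lc_diff)
    also have "\<dots> = e z1 - e z2" by (simp only: lc_delta[OF assms(2) z(1)] lc_delta[OF assms(2) z(2)])
    also have "\<dots> = 0" using z(3) by simp
    finally have "lc J ?c e = 0" .
    then have "?c z1 = 0" using assms(1) z(1) unfolding iindep_def by blast
    then show False using ne by simp
  qed
qed

lemma iindep_independent:
  assumes "iindep J e" "finite J"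
  shows "FS.independent (e ` J)"
proof
  assume "FS.dependent (e ` J)"
  then obtain u where u: "\<exists>v\<in>e ` J. u v \<noteq> 0" "(\<Sum>v\<in>e ` J. fscale (u v) v) = 0"
    using FS.dependent_finite[of "e ` J"] assms(2) by blast
  have inj: "inj_on e J" by (rule iindep_inj[OF assms])
  have "lc J (u \<circ> e) e = (\<Sum>v\<in>e ` J. fscale (u v) v)"
    unfolding lc_def by (simp add: sum.reindex[OF inj])
  then have "lc J (u \<circ> e) e = 0" using u(2) by simp
  then have "\<forall>z\<in>J. (u \<circ> e) z = 0" using assms(1) unfolding iindep_def by blast
  then show False using u(1) by auto
qed

lemma ibasis_of_set:
  assumes "finite B" "FS.independent B" "V \<subseteq> FS.span B" "B \<subseteq> V" "bij_betw h I B"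
  shows "ibasis V I h"
  unfolding ibasis_def
proof (intro conjI)
  show fI: "finite I" using assms(1,5) bij_betw_finite by blast
  show "h ` I \<subseteq> V" using assms(4,5) unfolding bij_betw_def by blast
  have lcB: "lc I c h = (\<Sum>v\<in>B. fscale (c (inv_into I h v)) v)" for c
  proof -
    have "(\<Sum>v\<in>B. fscale (c (inv_into I h v)) v) = (\<Sum>i\<in>I. (\<lambda>v. fscale (c (inv_into I h v)) v) (h i))"
      by (rule sum.reindex_bij_betw[OF assms(5), symmetric])
    also have "\<dots> = lc I c h" unfolding lc_def using assms(5)
      by (intro sum.cong refl) (simp add: bij_betw_inv_into_left)
    finally show ?thesis by simp
  qed
  show "\<forall>x\<in>V. \<exists>c. x = lc I c h"
  proof
    fix x assume "x \<in> V"
    then have "x \<in> range (\<lambda>u. \<Sum>v\<in>B. fscale (u v) v)"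
      using assms(3) FS.span_finite[OF assms(1)] by blast
    then obtain u where u: "x = (\<Sum>v\<in>B. fscale (u v) v)" by blast
    have "lc I (u \<circ> h) h = (\<Sum>v\<in>B. fscale (u v) v)"
      unfolding lcB using assms(5) by (intro sum.cong refl) (simp add: bij_betw_inv_into_right)
    then have "x = lc I (u \<circ> h) h" using u by argo
    then show "\<exists>c. x = lc I c h" by blast
  qed
  show "iindep I h"
    unfolding iindep_def
  proof (intro allI impI ballI)
    fix c i assume c: "lc I c h = 0" and i: "i \<in> I"
    have s0: "(\<Sum>v\<in>B. fscale (c (inv_into I h v)) v) = 0" using c lcB[of c] by argo
    have "\<forall>v\<in>B. c (inv_into I h v) = 0"
    proof (rule ccontr)
      assume "\<not> (\<forall>v\<in>B. c (inv_into I h v) = 0)"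
      then have ex: "\<exists>v\<in>B. (\<lambda>v. c (inv_into I h v)) v \<noteq> 0" by blast
      have "\<exists>u. (\<exists>v\<in>B. u v \<noteq> 0) \<and> (\<Sum>v\<in>B. fscale (u v) v) = 0"
        by (rule exI[of _ "\<lambda>v. c (inv_into I h v)"]) (use ex s0 in blast)
      then have "FS.dependent B" by (subst FS.dependent_finite[OF assms(1)])
      then show False using assms(2) by blast
    qed
    moreover have "h i \<in> B" using i assms(5) unfolding bij_betw_def by blast
    ultimately show "c i = 0" using i assms(5) by (metis bij_betw_inv_into_left)
  qed
qed

lemma ibasis_extend:
  fixes V :: "('i \<Rightarrow> 'k::field) set" and e :: "'z \<Rightarrow> ('i \<Rightarrow> 'k)"
  assumes V: "fsubspace V" "finite B0" "V \<subseteq> FS.span B0"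
    and e: "finite J" "e ` J \<subseteq> V" "iindep J e"
  shows "\<exists>a u. (\<forall>s<a. u s \<in> V) \<and> ibasis V (Inl ` {..<a} \<union> Inr ` J) (case_sum u e)
            \<and> a + card J = fdim V"
proof -
  have inj: "inj_on e J" by (rule iindep_inj[OF e(3,1)])
  have indS: "FS.independent (e ` J)" by (rule iindep_independent[OF e(3,1)])
  obtain B where B: "e ` J \<subseteq> B" "B \<subseteq> V" "FS.independent B" "V \<subseteq> FS.span B"
    using FS.maximal_independent_subset_extend[OF e(2) indS] by blast
  have "B \<subseteq> FS.span B0" using B(2) V(3) by blast
  then have finB: "finite B" using FS.independent_span_bound[OF V(2) B(3)] by blast
  have cardB: "card B = fdim V" using FS.basis_card_eq_dim[OF B(2) B(4) B(3)] .
  define R where "R = B - e ` J"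
  have finR: "finite R" using finB unfolding R_def by blast
  obtain u where u: "bij_betw u {0..<card R} R" using ex_bij_betw_nat_finite[OF finR] by blast
  define a where "a = card R"
  have u': "bij_betw u {..<a} R" using u unfolding a_def by (simp add: atLeast0LessThan)
  have bij: "bij_betw (case_sum u e) (Inl ` {..<a} \<union> Inr ` J) B"
    unfolding bij_betw_def
  proof
    show "inj_on (case_sum u e) (Inl ` {..<a} \<union> Inr ` J)"
    proof (rule inj_onI)
      fix x y assume x: "x \<in> Inl ` {..<a} \<union> Inr ` J" and y: "y \<in> Inl ` {..<a} \<union> Inr ` J"
        and eq: "case_sum u e x = case_sum u e y"
      have uR: "\<And>s. s < a \<Longrightarrow> u s \<in> R" using u' unfolding bij_betw_def by blast
      show "x = y"
        using x y eq uR inj_onD[OF inj] inj_onD[OF bij_betw_imp_inj_on[OF u']]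
        unfolding R_def by (auto simp: image_iff; metis)
    qed
    show "case_sum u e ` (Inl ` {..<a} \<union> Inr ` J) = B"
    proof -
      have "case_sum u e ` (Inl ` {..<a} \<union> Inr ` J) = u ` {..<a} \<union> e ` J"
        by (simp add: image_Un image_image)
      also have "\<dots> = R \<union> e ` J" using u' unfolding bij_betw_def by simp
      also have "\<dots> = B" using B(1) unfolding R_def by blast
      finally show ?thesis .
    qed
  qed
  have "ibasis V (Inl ` {..<a} \<union> Inr ` J) (case_sum u e)"
    by (rule ibasis_of_set[OF finB B(3) B(4) B(2) bij])
  moreover have "\<forall>s<a. u s \<in> V" using u' B(2) unfolding bij_betw_def R_def by blast
  moreover have "a + card J = fdim V"
  proof -
    have "card B = card R + card (e ` J)"
      unfolding R_def using finB B(1) by (metis card_Diff_subset finite_subset card_mono le_add_diff_inverse2)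
    then show ?thesis using card_image[OF inj] cardB unfolding a_def by simp
  qed
  ultimately show ?thesis by blast
qed

lemma ibasis_exists:
  fixes V :: "('i \<Rightarrow> 'k::field) set"
  assumes "fsubspace V" "finite B0" "V \<subseteq> FS.span B0"
  shows "\<exists>u. ibasis V {..<fdim V} u"
proof -
  have "iindep ({}::unit set) (\<lambda>_. 0 :: 'i \<Rightarrow> 'k)" unfolding iindep_def by simp
  then obtain a u where au: "(\<forall>s<a. u s \<in> V)"
    "ibasis V (Inl ` {..<a} \<union> Inr ` ({}::unit set)) (case_sum u (\<lambda>_::unit. 0::'i \<Rightarrow> 'k))" "a + card ({}::unit set) = fdim V"
    using ibasis_extend[OF assms, of "{}::unit set" "\<lambda>_. 0"] by blast
  have "bij_betw Inl {..<a} (Inl ` {..<a} \<union> Inr ` ({}::unit set))"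
    by (auto simp: bij_betw_def)
  from ibasis_reindex[OF au(2) this]
  have "ibasis V {..<a} (case_sum u (\<lambda>_::unit. 0::'i \<Rightarrow> 'k) \<circ> Inl)" .
  moreover have "case_sum u (\<lambda>_::unit. 0::'i \<Rightarrow> 'k) \<circ> Inl = u" by (simp add: fun_eq_iff)
  ultimately have "ibasis V {..<a} u" by simp
  then show ?thesis using au(3) by auto
qed


lemma arrsp_iff: "a \<in> arrsp n \<longleftrightarrow> (\<forall>j\<ge>n. a j = 0)"
  by (simp add: arrsp_def)

lemma gam_arrsp: "j < n \<Longrightarrow> gam j \<in> arrsp n"
  by (simp add: arrsp_def gam_def)

lemma subspace_arrsp: "fsubspace (arrsp n)"
  by (rule FS.subspaceI) (auto simp: arrsp_def fscale_def)

lemma arrsp_lc: "a \<in> arrsp n \<Longrightarrow> a = lc {..<n} a gam"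
proof -
  assume a: "a \<in> arrsp n"
  show "a = lc {..<n} a gam"
  proof
    fix j
    have "lc {..<n} a gam j = (\<Sum>l<n. a l * gam l j)" unfolding lc_def by (simp add: sum_fun_apply)
    also have "\<dots> = (\<Sum>l<n. if l = j then a j else 0)" by (intro sum.cong) (auto simp: gam_def)
    also have "\<dots> = a j" using a by (simp add: arrsp_def)
    finally show "a j = lc {..<n} a gam j" by simp
  qed
qed

lemma arrsp_span: "arrsp n \<subseteq> FS.span (gam ` {..<n})"
proof
  fix a assume a: "a \<in> arrsp n"
  have "lc {..<n} a gam \<in> FS.span (gam ` {..<n})"
    unfolding lc_def by (intro FS.span_sum FS.span_scale FS.span_base) auto
  then show "a \<in> FS.span (gam ` {..<n})" using arrsp_lc[OF a] by simp
qed

lemma fin_dim_arrsp: "fin_dim_subspace (arrsp n)"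
proof -
  have sub: "gam ` {..<n} \<subseteq> arrsp n" using gam_arrsp by blast
  have "FS.span (gam ` {..<n}) = arrsp n"
    by (rule FS.span_subspace[OF sub arrsp_span subspace_arrsp])
  then show ?thesis unfolding fin_dim_subspace_def using subspace_arrsp sub
    by (intro conjI exI[of _ "gam ` {..<n}"]) auto
qed

lemma fin_dim_basis:
  assumes "fin_dim_subspace V"
  shows "\<exists>u. ibasis V {..<fdim V} u"
proof -
  obtain B where "finite B" "B \<subseteq> V" "FS.span B = V" "fsubspace V"
    using assms unfolding fin_dim_subspace_def by blast
  then show ?thesis using ibasis_exists[of V B] by blast
qed

lemma fin_dim_span: "fin_dim_subspace V \<Longrightarrow> \<exists>B. finite B \<and> V \<subseteq> FS.span B"
  unfolding fin_dim_subspace_def by blast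

lemma fin_dim_sub: "fin_dim_subspace V \<Longrightarrow> fsubspace V"
  unfolding fin_dim_subspace_def by blast

lemma tensor_sp_iff:
  "t \<in> tensor_sp n V \<longleftrightarrow> (\<forall>l<n. (\<lambda>x. t (l, x)) \<in> V) \<and> (\<forall>l x. n \<le> l \<longrightarrow> t (l, x) = 0)"
  unfolding tensor_sp_def by (auto simp: fun_eq_iff)

lemma subspace_tensor_sp:
  assumes "fsubspace V" shows "fsubspace (tensor_sp n V)"
proof (rule FS.subspaceI)
  show "0 \<in> tensor_sp n V" unfolding tensor_sp_iff using FS.subspace_0[OF assms]
    by (simp add: zero_fun_def)
next
  fix x y assume "x \<in> tensor_sp n V" "y \<in> tensor_sp n V"
  then show "x + y \<in> tensor_sp n V" unfolding tensor_sp_iff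
    using FS.subspace_add[OF assms] by (auto simp: plus_fun_def)
next
  fix c x assume "x \<in> tensor_sp n V"
  then show "fscale c x \<in> tensor_sp n V" unfolding tensor_sp_iff
    using FS.subspace_scale[OF assms] by (auto simp: fscale_def)
qed

lemma psi_lin:
  assumes "\<forall>i<n. lin_on (sp1 N) (sp2 N) (arr N i)" "fsubspace (sp1 N)" "fsubspace (sp2 N)"
  shows "lin_on (tensor_sp n (sp1 N)) (sp2 N) (psi n N)"
  unfolding lin_on_def
proof (intro conjI ballI allI)
  fix x assume "x \<in> tensor_sp n (sp1 N)"
  then show "psi n N x \<in> sp2 N" unfolding psi_def tensor_sp_iff
    using assms(1) by (intro FS.subspace_sum[OF assms(3)]) (auto intro: lin_on_in)
next
  fix x y assume xy: "x \<in> tensor_sp n (sp1 N)" "y \<in> tensor_sp n (sp1 N)"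
  have "arr N l (\<lambda>z. (x + y) (l, z)) = arr N l (\<lambda>z. x (l, z)) + arr N l (\<lambda>z. y (l, z))" if "l < n" for l
  proof -
    have "(\<lambda>z. (x + y) (l, z)) = (\<lambda>z. x (l, z)) + (\<lambda>z. y (l, z))" by (simp add: fun_eq_iff)
    then show ?thesis using lin_on_add assms(1) xy that unfolding tensor_sp_iff by metis
  qed
  then show "psi n N (x + y) = psi n N x + psi n N y"
    unfolding psi_def by (simp add: sum.distrib)
next
  fix c x assume x: "x \<in> tensor_sp n (sp1 N)"
  have "arr N l (\<lambda>z. (fscale c x) (l, z)) = fscale c (arr N l (\<lambda>z. x (l, z)))" if "l < n" for l
  proof -
    have "(\<lambda>z. (fscale c x) (l, z)) = fscale c (\<lambda>z. x (l, z))" by (simp add: fun_eq_iff)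
    then show ?thesis using lin_on_scale assms(1) x that unfolding tensor_sp_iff by metis
  qed
  then show "psi n N (fscale c x) = fscale c (psi n N x)"
    unfolding psi_def by (simp add: FS.scale_sum_right)
qed

lemma psi_injective_iff:
  assumes "is_rep n N"
  shows "psi_injective n N \<longleftrightarrow> (\<forall>t\<in>tensor_sp n (sp1 N). psi n N t = 0 \<longrightarrow> t = 0)"
proof -
  have s1: "fsubspace (sp1 N)" and s2: "fsubspace (sp2 N)"
    using assms unfolding is_rep_def fin_dim_subspace_def by auto
  have "lin_on (tensor_sp n (sp1 N)) (sp2 N) (psi n N)"
    using assms s1 s2 unfolding is_rep_def by (intro psi_lin) auto
  then show ?thesis unfolding psi_injective_def
    by (rule lin_on_inj_iff) (rule subspace_tensor_sp[OF s1])
qed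

lemma pullback_simps[simp]:
  "sp1 (pullback r \<alpha> M) = sp1 M" "sp2 (pullback r \<alpha> M) = sp2 M"
  "arr (pullback r \<alpha> M) j = (\<lambda>m. \<Sum>i<r. fscale (\<alpha> (gam j) i) (arr M i m))"
  by (simp_all add: pullback_def)

lemma is_rep_pullback:
  assumes "is_rep r M"
  shows "is_rep d (pullback r \<alpha> M)"
proof -
  have s2: "fsubspace (sp2 M)" using assms unfolding is_rep_def fin_dim_subspace_def by auto
  have L: "\<forall>i<r. lin_on (sp1 M) (sp2 M) (arr M i)" using assms unfolding is_rep_def by auto
  have "lin_on (sp1 M) (sp2 M) (\<lambda>m. \<Sum>i<r. fscale (\<alpha> (gam j) i) (arr M i m))" for j
    unfolding lin_on_def
  proof (intro conjI ballI allI)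
    fix x assume "x \<in> sp1 M"
    then show "(\<Sum>i<r. fscale (\<alpha> (gam j) i) (arr M i x)) \<in> sp2 M"
      using L by (intro FS.subspace_sum[OF s2] FS.subspace_scale[OF s2]) (auto intro: lin_on_in)
  next
    fix x y assume xy: "x \<in> sp1 M" "y \<in> sp1 M"
    have e: "arr M i (x + y) = arr M i x + arr M i y" if "i < r" for i
      using L that xy lin_on_add by blast
    show "(\<Sum>i<r. fscale (\<alpha> (gam j) i) (arr M i (x + y))) =
      (\<Sum>i<r. fscale (\<alpha> (gam j) i) (arr M i x)) + (\<Sum>i<r. fscale (\<alpha> (gam j) i) (arr M i y))"
      by (simp add: e FS.scale_right_distrib sum.distrib)
  next
    fix c x assume x: "x \<in> sp1 M"
    have e: "arr M i (fscale c x) = fscale c (arr M i x)" if "i < r" for i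
      using L that x lin_on_scale by blast
    show "(\<Sum>i<r. fscale (\<alpha> (gam j) i) (arr M i (fscale c x))) =
      fscale c (\<Sum>i<r. fscale (\<alpha> (gam j) i) (arr M i x))"
      by (simp add: e FS.scale_sum_right FS.scale_scale mult.commute)
  qed
  then show ?thesis using assms unfolding is_rep_def by simp
qed

lemma lin_on_inv:
  assumes "lin_on A B f" "bij_betw f A B" "fsubspace A"
  shows "lin_on B A (inv_into A f)"
  unfolding lin_on_def
proof (intro conjI ballI allI)
  fix y assume "y \<in> B" then show "inv_into A f y \<in> A"
    using assms(2) by (metis bij_betw_def inv_into_into)
next
  fix x y assume xy: "x \<in> B" "y \<in> B"
  have a: "inv_into A f x \<in> A" "inv_into A f y \<in> A"
    using xy assms(2) by (metis bij_betw_def inv_into_into)+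
  have fx: "f (inv_into A f x) = x" "f (inv_into A f y) = y"
    using xy assms(2) by (simp_all add: bij_betw_inv_into_right)
  have "f (inv_into A f x + inv_into A f y) = x + y"
    using lin_on_add[OF assms(1) a] fx by simp
  moreover have "inv_into A f x + inv_into A f y \<in> A" using a FS.subspace_add[OF assms(3)] by blast
  ultimately show "inv_into A f (x + y) = inv_into A f x + inv_into A f y"
    using assms(2) by (metis bij_betw_inv_into_left)
next
  fix c x assume x: "x \<in> B"
  have a: "inv_into A f x \<in> A" using x assms(2) by (metis bij_betw_def inv_into_into)
  have fx: "f (inv_into A f x) = x" using x assms(2) by (simp add: bij_betw_inv_into_right)
  have "f (fscale c (inv_into A f x)) = fscale c x" using lin_on_scale[OF assms(1) a] fx by simp
  moreover have "fscale c (inv_into A f x) \<in> A" using a FS.subspace_scale[OF assms(3)] by blast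
  ultimately show "inv_into A f (fscale c x) = fscale c (inv_into A f x)"
    using assms(2) by (metis bij_betw_inv_into_left)
qed

lemma iso_flip:
  assumes "is_hom n A B f1 f2" "bij_betw f1 (sp1 A) (sp1 B)" "bij_betw f2 (sp2 A) (sp2 B)"
    "fsubspace (sp1 A)" "fsubspace (sp2 A)" "\<forall>i<n. \<forall>x\<in>sp1 A. arr A i x \<in> sp2 A"
  shows "is_iso n B A"
proof -
  let ?g1 = "inv_into (sp1 A) f1" and ?g2 = "inv_into (sp2 A) f2"
  have l1: "lin_on (sp1 B) (sp1 A) ?g1" using lin_on_inv assms unfolding is_hom_def by blast
  have l2: "lin_on (sp2 B) (sp2 A) ?g2" using lin_on_inv assms unfolding is_hom_def by blast
  have "?g2 (arr B i y) = arr A i (?g1 y)" if "i < n" "y \<in> sp1 B" for i y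
  proof -
    have g1y: "?g1 y \<in> sp1 A" and fy: "f1 (?g1 y) = y"
      using that assms(2) by (metis bij_betw_def inv_into_into, simp add: bij_betw_inv_into_right)
    have "f2 (arr A i (?g1 y)) = arr B i y"
      using assms(1) that g1y fy unfolding is_hom_def by metis
    moreover have "arr A i (?g1 y) \<in> sp2 A" using assms(6) that g1y by blast
    ultimately show ?thesis using assms(3) by (metis bij_betw_inv_into_left)
  qed
  then have "is_hom n B A ?g1 ?g2" unfolding is_hom_def using l1 l2 by blast
  moreover have "bij_betw ?g1 (sp1 B) (sp1 A)" "bij_betw ?g2 (sp2 B) (sp2 A)"
    using assms(2,3) by (simp_all add: bij_betw_inv_into)
  ultimately show ?thesis unfolding is_iso_def by blast
qed

lemma alpha_exists:
  assumes "v \<in> Gr d r"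
  shows "\<exists>\<alpha>. inj_arr d r \<alpha> \<and> \<alpha> ` arrsp d = v"
proof -
  have v: "fsubspace v" "v \<subseteq> arrsp r" "fdim v = d" using assms unfolding Gr_def by auto
  have "v \<subseteq> FS.span (gam ` {..<r})" using v(2) arrsp_span by blast
  then obtain b where b: "ibasis v {..<d} b" using ibasis_exists[OF v(1)] v(3) by fastforce
  have bv: "b ` {..<d} \<subseteq> v" and ind: "iindep {..<d} b" using b unfolding ibasis_def by auto
  define \<alpha> where "\<alpha> c = lc {..<d} c b" for c :: "nat \<Rightarrow> 'a"
  have lin: "lin_on (arrsp d) (arrsp r) \<alpha>"
    unfolding lin_on_def \<alpha>_def
  proof (intro conjI ballI allI)
    fix x show "lc {..<d} x b \<in> arrsp r" using lc_in_subspace[OF v(1) bv] v(2) by blast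
  next
    fix x y :: "nat \<Rightarrow> 'a"
    have "lc {..<d} (x + y) b = lc {..<d} (\<lambda>z. x z + y z) b" by (simp add: plus_fun_def)
    then show "lc {..<d} (x + y) b = lc {..<d} x b + lc {..<d} y b" by (simp add: lc_add)
  next
    fix c and x :: "nat \<Rightarrow> 'a"
    have "lc {..<d} (fscale c x) b = lc {..<d} (\<lambda>z. c * x z) b" by (simp add: fscale_def)
    then show "lc {..<d} (fscale c x) b = fscale c (lc {..<d} x b)" by (simp add: lc_scale)
  qed
  have inj: "inj_on \<alpha> (arrsp d)"
  proof (rule inj_onI)
    fix x y assume xy: "x \<in> arrsp d" "y \<in> arrsp d" "\<alpha> x = \<alpha> y"
    show "x = y"
    proof
      fix j show "x j = y j"
      proof (cases "j < d")
        case True then show ?thesis using iindep_unique[OF ind] xy(3) unfolding \<alpha>_def by blast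
      next
        case False then show ?thesis using xy(1,2) unfolding arrsp_def by simp
      qed
    qed
  qed
  have img: "\<alpha> ` arrsp d = v"
  proof
    show "\<alpha> ` arrsp d \<subseteq> v" unfolding \<alpha>_def using lc_in_subspace[OF v(1) bv] by blast
  next
    show "v \<subseteq> \<alpha> ` arrsp d"
    proof
      fix x assume "x \<in> v"
      then obtain c where c: "x = lc {..<d} c b" using b unfolding ibasis_def by blast
      let ?c = "\<lambda>j. if j < d then c j else 0"
      have "?c \<in> arrsp d" unfolding arrsp_def by simp
      moreover have "\<alpha> ?c = x" unfolding \<alpha>_def c by (rule lc_cong) simp
      ultimately show "x \<in> \<alpha> ` arrsp d" by force
    qed
  qed
  show ?thesis using lin inj img unfolding inj_arr_def by blast
qed


lemma coordfun:
  fixes e :: "'z \<Rightarrow> ('i \<Rightarrow> 'k::field)"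
  assumes "ibasis V I e" "fsubspace V" "z0 \<in> I"
  shows "\<exists>\<phi>. lin_on V (UNIV :: (unit \<Rightarrow> 'k) set) \<phi> \<and> (\<forall>c. \<phi> (lc I c e) () = c z0)"
proof -
  let ?t = "\<lambda>z. (\<lambda>_::unit. if z = z0 then 1 else (0::'k))"
  obtain \<phi> where \<phi>: "lin_on V (UNIV :: (unit \<Rightarrow> 'k) set) \<phi>" "\<forall>z\<in>I. \<phi> (e z) = ?t z"
    using ibasis_linext[OF assms(1,2), of UNIV ?t] by auto
  have fin: "finite I" and eI: "e ` I \<subseteq> V" using assms(1) unfolding ibasis_def by auto
  have "\<phi> (lc I c e) () = c z0" for c
  proof -
    have "\<phi> (lc I c e) = lc I c (\<lambda>z. \<phi> (e z))" by (rule lin_on_lc[OF \<phi>(1) assms(2) eI])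
    also have "\<dots> = lc I c ?t" unfolding lc_def using \<phi>(2) by (intro sum.cong) auto
    finally have "\<phi> (lc I c e) () = (\<Sum>z\<in>I. c z * (if z = z0 then 1 else 0))"
      unfolding lc_def by (simp add: sum_fun_apply)
    also have "\<dots> = c z0" using fin assms(3) by (simp add: if_distrib sum.delta' cong: if_cong)
    finally show ?thesis .
  qed
  then show ?thesis using \<phi>(1) by blast
qed

lemma ibasis_nonzero_coord:
  assumes "ibasis V I e" "x = lc I c e" "x \<noteq> 0"
  shows "\<exists>z\<in>I. c z \<noteq> 0"
proof (rule ccontr)
  assume "\<not> (\<exists>z\<in>I. c z \<noteq> 0)"
  then have "lc I c e = lc I (\<lambda>_. 0) e" by (intro lc_cong) auto
  also have "\<dots> = 0" unfolding lc_def by simp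
  finally show False using assms by simp
qed

lemma struct:
  assumes rep: "is_rep d N" and inj: "psi_injective d N"
  shows "\<exists>n m a u. ibasis (sp1 N) {..<n} m \<and> n = fdim (sp1 N) \<and> (\<forall>s<a. u s \<in> sp2 N) \<and>
     ibasis (sp2 N) (Inl ` {..<a} \<union> Inr ` ({..<n} \<times> {..<d})) (case_sum u (\<lambda>(k,i). arr N i (m k)))
     \<and> a + n * d = fdim (sp2 N)"
proof -
  have f1: "fin_dim_subspace (sp1 N)" and f2: "fin_dim_subspace (sp2 N)"
    and L: "\<forall>i<d. lin_on (sp1 N) (sp2 N) (arr N i)" using rep unfolding is_rep_def by auto
  have s1: "fsubspace (sp1 N)" and s2: "fsubspace (sp2 N)" using f1 f2 fin_dim_sub by auto
  define n where "n = fdim (sp1 N)"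
  obtain m where m: "ibasis (sp1 N) {..<n} m" using fin_dim_basis[OF f1] unfolding n_def by blast
  have mV: "m k \<in> sp1 N" if "k < n" for k using m that unfolding ibasis_def by auto
  have indm: "iindep {..<n} m" using m unfolding ibasis_def by auto
  define J where "J = {..<n} \<times> {..<d}"
  define e2 where "e2 = (\<lambda>(k,i). arr N i (m k))"
  have finJ: "finite J" unfolding J_def by simp
  have e2J: "e2 ` J \<subseteq> sp2 N" unfolding J_def e2_def using L mV by (auto intro: lin_on_in)
  have ind2: "iindep J e2"
    unfolding iindep_def
  proof (intro allI impI ballI)
    fix c z assume c: "lc J c e2 = 0" and z: "z \<in> J"
    define y where "y i = lc {..<n} (\<lambda>k. c (k, i)) m" for i
    define t where "t = (\<lambda>(i, x). if i < d then y i x else 0)"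
    have yV: "y i \<in> sp1 N" for i unfolding y_def using mV by (intro lc_in_subspace[OF s1]) auto
    have tsl: "(\<lambda>x. t (i, x)) = y i" if "i < d" for i using that unfolding t_def by auto
    have tT: "t \<in> tensor_sp d (sp1 N)" unfolding tensor_sp_iff using tsl yV by (auto simp: t_def)
    have "psi d N t = (\<Sum>i<d. arr N i (y i))" unfolding psi_def using tsl by simp
    also have "\<dots> = (\<Sum>i<d. lc {..<n} (\<lambda>k. c (k, i)) (\<lambda>k. arr N i (m k)))"
      unfolding y_def using L mV by (intro sum.cong refl lin_on_lc[OF _ s1]) auto
    also have "\<dots> = (\<Sum>i<d. \<Sum>k<n. fscale (c (k, i)) (e2 (k, i)))"
      unfolding lc_def e2_def by simp
    also have "\<dots> = (\<Sum>k<n. \<Sum>i<d. fscale (c (k, i)) (e2 (k, i)))" by (rule sum.swap)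
    also have "\<dots> = lc J c e2" unfolding lc_def J_def by (simp add: sum.cartesian_product)
    finally have "psi d N t = 0" using c by simp
    then have "t = 0" using inj tT unfolding psi_injective_iff[OF rep] by blast
    obtain k i where ki: "z = (k, i)" "k < n" "i < d" using z unfolding J_def by auto
    have "y i = 0" using tsl[OF ki(3)] \<open>t = 0\<close> by (simp add: fun_eq_iff)
    then have "(\<lambda>k. c (k, i)) k = 0" using indm ki(2) unfolding iindep_def y_def by blast
    then show "c z = 0" using ki by simp
  qed
  obtain B0 where B0: "finite B0" "sp2 N \<subseteq> FS.span B0" using fin_dim_span[OF f2] by blast
  obtain a u where au: "\<forall>s<a. u s \<in> sp2 N" "ibasis (sp2 N) (Inl ` {..<a} \<union> Inr ` J) (case_sum u e2)"
      "a + card J = fdim (sp2 N)"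
    using ibasis_extend[OF s2 B0 finJ e2J ind2] by blast
  have "card J = n * d" unfolding J_def by (simp add: card_cartesian_product)
  then show ?thesis using m au unfolding n_def J_def e2_def by auto
qed

definition Xt :: "nat \<Rightarrow> (nat, nat, 'k::field) krep" where
  "Xt d = \<lparr> sp1 = arrsp 1, sp2 = arrsp d, arr = (\<lambda>i c. fscale (c 0) (gam i)) \<rparr>"

definition Yt :: "(nat, nat, 'k::field) krep" where
  "Yt = \<lparr> sp1 = arrsp 1, sp2 = {0}, arr = (\<lambda>i c. 0) \<rparr>"

lemma fin_dim_zero: "fin_dim_subspace {0}"
  unfolding fin_dim_subspace_def by (intro conjI exI[of _ "{}"]) auto

lemma is_rep_Xt: "is_rep d (Xt d :: (nat, nat, 'k::field) krep)"
proof -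
  have "lin_on (arrsp 1) (arrsp d) (\<lambda>c::nat \<Rightarrow> 'k. fscale (c 0) (gam i))" if "i < d" for i
    unfolding lin_on_def using that
    by (auto simp: gam_arrsp FS.subspace_scale[OF subspace_arrsp] FS.scale_left_distrib FS.scale_scale)
  then show ?thesis unfolding is_rep_def Xt_def by (simp add: fin_dim_arrsp del: One_nat_def)
qed

lemma is_rep_Yt: "is_rep d (Yt :: (nat, nat, 'k::field) krep)"
  unfolding is_rep_def Yt_def by (auto simp: fin_dim_arrsp fin_dim_zero lin_on_def)

lemma projective_psi_injective:
  assumes rep: "is_rep d N" and proj: "projective_rep d N"
  shows "psi_injective d N"
proof -
  have f1: "fin_dim_subspace (sp1 N)" and L: "\<forall>i<d. lin_on (sp1 N) (sp2 N) (arr N i)"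
    and s1: "fsubspace (sp1 N)" and s2: "fsubspace (sp2 N)"
    using rep fin_dim_sub unfolding is_rep_def by auto
  obtain m where m: "ibasis (sp1 N) {..<fdim (sp1 N)} m" using fin_dim_basis[OF f1] by blast
  have key: "\<phi> (\<lambda>x. t (j, x)) () = 0"
    if \<phi>: "lin_on (sp1 N) (UNIV :: (unit \<Rightarrow> 'c) set) \<phi>" and t: "t \<in> tensor_sp d (sp1 N)"
      and pt: "psi d N t = 0" and j: "j < d" for \<phi> t j
  proof -
    define h1 where "h1 x = fscale (\<phi> x ()) (gam 0 :: nat \<Rightarrow> 'c)" for x
    have g0: "fscale a (gam 0 :: nat \<Rightarrow> 'c) \<in> arrsp 1" for a
      by (rule FS.subspace_scale[OF subspace_arrsp gam_arrsp]) simp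
    have hom_h: "is_hom d N Yt h1 (\<lambda>_. 0)"
      unfolding is_hom_def Yt_def lin_on_def h1_def
      using \<phi> g0
      by (auto simp: lin_on_def FS.scale_left_distrib FS.subspace_scale[OF subspace_arrsp])
    have hom_g: "is_hom d (Xt d) Yt id (\<lambda>_. 0)"
      unfolding is_hom_def Yt_def Xt_def lin_on_def by auto
    have surj1: "id ` sp1 (Xt d) = sp1 (Yt :: (nat, nat, 'c) krep)" by (simp add: Xt_def Yt_def)
    have surj2: "(\<lambda>_. 0) ` sp2 (Xt d :: (nat, nat, 'c) krep) = sp2 (Yt :: (nat, nat, 'c) krep)"
      using FS.subspace_0[OF subspace_arrsp] by (auto simp: Xt_def Yt_def)
    have "\<exists>f1 f2. is_hom d N (Xt d) f1 f2 \<and> (\<forall>x\<in>sp1 N. id (f1 x) = h1 x) \<and>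
        (\<forall>y\<in>sp2 N. (\<lambda>_. 0) (f2 y) = (\<lambda>_. 0::nat \<Rightarrow> 'c) y)"
      using proj[unfolded projective_rep_def, rule_format, of "Xt d" Yt id "\<lambda>_. 0" h1 "\<lambda>_. 0"]
        is_rep_Xt is_rep_Yt hom_g hom_h surj1 surj2 by blast
    then obtain f1 f2 where f: "is_hom d N (Xt d) f1 f2" "\<forall>x\<in>sp1 N. id (f1 x) = h1 x"
      by blast
    have l2: "lin_on (sp2 N) (arrsp d) f2" using f(1) unfolding is_hom_def Xt_def by simp
    have fa: "f2 (arr N i x) = fscale (\<phi> x ()) (gam i)" if "i < d" "x \<in> sp1 N" for i x
      using f that unfolding is_hom_def Xt_def h1_def by (simp add: gam_def)
    have tl: "(\<lambda>x. t (l, x)) \<in> sp1 N" if "l < d" for l using t that unfolding tensor_sp_iff by blast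
    have "f2 (psi d N t) = (\<Sum>l<d. f2 (arr N l (\<lambda>x. t (l, x))))"
      unfolding psi_def using L tl by (intro lin_on_sum[OF l2 s2]) (auto intro: lin_on_in)
    also have "\<dots> = (\<Sum>l<d. fscale (\<phi> (\<lambda>x. t (l, x)) ()) (gam l))"
      using fa tl by (intro sum.cong) auto
    finally have "(\<Sum>l<d. fscale (\<phi> (\<lambda>x. t (l, x)) ()) (gam l)) = 0"
      using pt lin_on_0[OF l2 s2] by simp
    then have "(\<Sum>l<d. fscale (\<phi> (\<lambda>x. t (l, x)) ()) (gam l)) j = 0" by simp
    then have "(\<Sum>l<d. \<phi> (\<lambda>x. t (l, x)) () * gam l j) = 0" by (simp add: sum_fun_apply)
    moreover have "(\<Sum>l<d. \<phi> (\<lambda>x. t (l, x)) () * gam l j) = \<phi> (\<lambda>x. t (j, x)) ()"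
      using j by (simp add: gam_def if_distrib sum.delta cong: if_cong)
    ultimately show ?thesis by simp
  qed
  show ?thesis
    unfolding psi_injective_iff[OF rep]
  proof (intro ballI impI)
    fix t assume t: "t \<in> tensor_sp d (sp1 N)" and pt: "psi d N t = 0"
    show "t = 0"
    proof (rule ccontr)
      assume "t \<noteq> 0"
      then obtain j x where jx: "t (j, x) \<noteq> 0" by (auto simp: fun_eq_iff)
      have j: "j < d" using t jx unfolding tensor_sp_iff by (meson not_less)
      have tj: "(\<lambda>x. t (j, x)) \<in> sp1 N" "(\<lambda>x. t (j, x)) \<noteq> 0" using t j jx unfolding tensor_sp_iff
        by (auto simp: fun_eq_iff)
      obtain c where c: "(\<lambda>x. t (j, x)) = lc {..<fdim (sp1 N)} c m"
        using m tj(1) unfolding ibasis_def by blast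
      obtain z where z: "z \<in> {..<fdim (sp1 N)}" "c z \<noteq> 0" using ibasis_nonzero_coord[OF m c tj(2)] by blast
      obtain \<phi> where \<phi>: "lin_on (sp1 N) (UNIV :: (unit \<Rightarrow> 'c) set) \<phi>"
        "\<forall>c. \<phi> (lc {..<fdim (sp1 N)} c m) () = c z"
        using coordfun[OF m s1 z(1)] by blast
      have "\<phi> (\<lambda>x. t (j, x)) () = c z" using \<phi>(2) c by simp
      then show False using key[OF \<phi>(1) t pt j] z(2) by simp
    qed
  qed
qed


lemma psi_injective_projective:
  assumes rep: "is_rep d N" and inj: "psi_injective d N"
  shows "projective_rep d N"
  unfolding projective_rep_def
proof (intro allI impI)
  fix X Y :: "(nat, nat, 'c) krep" and g1 g2 h1 h2
  assume H: "is_rep d X \<and> is_rep d Y \<and> is_hom d X Y g1 g2 \<and> g1 ` sp1 X = sp1 Y \<and> g2 ` sp2 X = sp2 Y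
    \<and> is_hom d N Y h1 h2"
  have repX: "is_rep d X" and homg: "is_hom d X Y g1 g2" and sg1: "g1 ` sp1 X = sp1 Y"
    and sg2: "g2 ` sp2 X = sp2 Y" and homh: "is_hom d N Y h1 h2" using H by auto
  have LN: "\<forall>i<d. lin_on (sp1 N) (sp2 N) (arr N i)" and s1: "fsubspace (sp1 N)" and s2: "fsubspace (sp2 N)"
    using rep fin_dim_sub unfolding is_rep_def by auto
  have LX: "\<forall>i<d. lin_on (sp1 X) (sp2 X) (arr X i)" and sX1: "fsubspace (sp1 X)" and sX2: "fsubspace (sp2 X)"
    using repX fin_dim_sub unfolding is_rep_def by auto
  have g1l: "lin_on (sp1 X) (sp1 Y) g1" and g2l: "lin_on (sp2 X) (sp2 Y) g2"
    and g_arr: "\<forall>i<d. \<forall>x\<in>sp1 X. g2 (arr X i x) = arr Y i (g1 x)" using homg unfolding is_hom_def by auto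
  have h1l: "lin_on (sp1 N) (sp1 Y) h1" and h2l: "lin_on (sp2 N) (sp2 Y) h2"
    and h_arr: "\<forall>i<d. \<forall>x\<in>sp1 N. h2 (arr N i x) = arr Y i (h1 x)" using homh unfolding is_hom_def by auto
  from struct[OF rep inj] obtain n m a u where st: "ibasis (sp1 N) {..<n} m" "n = fdim (sp1 N)" "\<forall>s<a. u s \<in> sp2 N"
     "ibasis (sp2 N) (Inl ` {..<a} \<union> Inr ` ({..<n} \<times> {..<d})) (case_sum u (\<lambda>(k,i). arr N i (m k)))"
     "a + n * d = fdim (sp2 N)"
    by (elim exE conjE)
  have mV: "m k \<in> sp1 N" if "k < n" for k using st(1) that unfolding ibasis_def by auto
  define x where "x k = (SOME x. x \<in> sp1 X \<and> g1 x = h1 (m k))" for k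
  have x: "x k \<in> sp1 X \<and> g1 (x k) = h1 (m k)" if "k < n" for k
  proof -
    have "h1 (m k) \<in> g1 ` sp1 X" using sg1 lin_on_in[OF h1l mV[OF that]] by simp
    then have "\<exists>x. x \<in> sp1 X \<and> g1 x = h1 (m k)" by force
    then show ?thesis unfolding x_def by (rule someI_ex)
  qed
  define y where "y s = (SOME y. y \<in> sp2 X \<and> g2 y = h2 (u s))" for s
  have y: "y s \<in> sp2 X \<and> g2 (y s) = h2 (u s)" if "s < a" for s
  proof -
    have "h2 (u s) \<in> g2 ` sp2 X" using sg2 lin_on_in[OF h2l] st(3) that by simp
    then have "\<exists>y. y \<in> sp2 X \<and> g2 y = h2 (u s)" by force
    then show ?thesis unfolding y_def by (rule someI_ex)
  qed
  obtain f1 where f1: "lin_on (sp1 N) (sp1 X) f1" "\<forall>k\<in>{..<n}. f1 (m k) = x k"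
    using ibasis_linext[OF st(1) s1 sX1, of x] x by auto
  define I2 where "I2 = Inl ` {..<a} \<union> Inr ` ({..<n} \<times> {..<d})"
  define e2 where "e2 = case_sum u (\<lambda>(k,i). arr N i (m k))"
  define t2 where "t2 = case_sum y (\<lambda>(k,i). arr X i (x k))"
  have b2: "ibasis (sp2 N) I2 e2" using st(4) unfolding I2_def e2_def .
  have t2W: "t2 z \<in> sp2 X" if "z \<in> I2" for z
  proof -
    from that consider (l) s where "z = Inl s" "s < a" | (r) k i where "z = Inr (k, i)" "k < n" "i < d"
      unfolding I2_def by auto
    then show ?thesis
    proof cases
      case l then show ?thesis using y unfolding t2_def by simp
    next
      case r
      have "arr X i (x k) \<in> sp2 X" using lin_on_in LX r x by blast
      then show ?thesis using r unfolding t2_def by simp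
    qed
  qed
  obtain f2 where f2: "lin_on (sp2 N) (sp2 X) f2" "\<forall>z\<in>I2. f2 (e2 z) = t2 z"
    using ibasis_linext[OF b2 s2 sX2, of t2] t2W by blast
  have hom: "is_hom d N X f1 f2"
    unfolding is_hom_def
  proof (intro conjI f1(1) f2(1) allI impI ballI)
    fix i z assume i: "i < d" and z: "z \<in> sp1 N"
    have l1: "lin_on (sp1 N) (sp2 X) (f2 \<circ> arr N i)" using lin_on_compose LN i f2(1) by blast
    have l2: "lin_on (sp1 N) (sp2 X) (arr X i \<circ> f1)" using lin_on_compose LX i f1(1) by blast
    have "(f2 \<circ> arr N i) z = (arr X i \<circ> f1) z"
    proof (rule ibasis_agree[OF st(1) s1 l1 l2 _ z])
      fix k assume k: "k \<in> {..<n}"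
      have "Inr (k, i) \<in> I2" using k i unfolding I2_def by auto
      then have "f2 (e2 (Inr (k, i))) = t2 (Inr (k, i))" using f2(2) by blast
      then have "f2 (arr N i (m k)) = arr X i (x k)" unfolding e2_def t2_def by simp
      then show "(f2 \<circ> arr N i) (m k) = (arr X i \<circ> f1) (m k)"
        using f1(2) k unfolding e2_def t2_def by simp
    qed
    then show "f2 (arr N i z) = arr X i (f1 z)" by simp
  qed
  have c1: "g1 (f1 z) = h1 z" if z: "z \<in> sp1 N" for z
  proof -
    have l1: "lin_on (sp1 N) (sp1 Y) (g1 \<circ> f1)" using lin_on_compose f1(1) g1l by blast
    have "(g1 \<circ> f1) z = h1 z"
    proof (rule ibasis_agree[OF st(1) s1 l1 h1l _ z])
      fix k assume "k \<in> {..<n}" then show "(g1 \<circ> f1) (m k) = h1 (m k)" using f1(2) x by simp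
    qed
    then show ?thesis by simp
  qed
  have c2: "g2 (f2 z) = h2 z" if z: "z \<in> sp2 N" for z
  proof -
    have l1: "lin_on (sp2 N) (sp2 Y) (g2 \<circ> f2)" using lin_on_compose f2(1) g2l by blast
    have "(g2 \<circ> f2) z = h2 z"
    proof (rule ibasis_agree[OF b2 s2 l1 h2l _ z])
      fix w assume w: "w \<in> I2"
      then consider (l) s where "w = Inl s" "s < a" | (r) k i where "w = Inr (k, i)" "k < n" "i < d"
        unfolding I2_def by auto
      then show "(g2 \<circ> f2) (e2 w) = h2 (e2 w)"
      proof cases
        case l
        have "f2 (e2 w) = t2 w" using f2(2) w by blast
        then have "f2 (u s) = y s" using l unfolding e2_def t2_def by simp
        then show ?thesis using y l unfolding e2_def by simp
      next
        case r
        have "f2 (e2 w) = t2 w" using f2(2) w by blast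
        then have "(g2 \<circ> f2) (e2 w) = g2 (arr X i (x k))" using r unfolding e2_def t2_def by simp
        also have "\<dots> = arr Y i (g1 (x k))" using g_arr r x by blast
        also have "\<dots> = arr Y i (h1 (m k))" using x r by simp
        also have "\<dots> = h2 (arr N i (m k))" using h_arr r mV by simp
        finally show ?thesis using r unfolding e2_def by simp
      qed
    qed
    then show ?thesis by simp
  qed
  show "\<exists>f1 f2. is_hom d N X f1 f2 \<and> (\<forall>x\<in>sp1 N. g1 (f1 x) = h1 x) \<and> (\<forall>y\<in>sp2 N. g2 (f2 y) = h2 y)"
    using hom c1 c2 by blast
qed

lemma projective_iff:
  assumes "is_rep d N" shows "projective_rep d N \<longleftrightarrow> psi_injective d N"
  using assms projective_psi_injective psi_injective_projective by blast


abbreviation Fr :: "nat \<Rightarrow> nat \<Rightarrow> nat \<Rightarrow> (nat \<times> unit + nat \<times> unit, nat \<times> unit + nat \<times> nat, 'k::field) krep" where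
  "Fr a n d \<equiv> dsum (mult_rep a P0) (mult_rep n (P1 d))"

lemma F_sp1: "x \<in> sp1 (Fr a n d) \<longleftrightarrow> (\<forall>p. x (Inl p) = 0) \<and> (\<forall>k u. n \<le> k \<longrightarrow> x (Inr (k, u)) = 0)"
proof -
  have "x \<in> sp1 (Fr a n d) \<longleftrightarrow>
    (\<forall>l. (if l < a then (\<lambda>u. x (Inl (l, u))) \<in> {0} else (\<lambda>u. x (Inl (l, u))) = 0)) \<and>
    (\<forall>l. (if l < n then (\<lambda>u. x (Inr (l, u))) \<in> UNIV else (\<lambda>u. x (Inr (l, u))) = 0))"
    by (simp add: dsum_def mult_rep_def P0_def P1_def comp_def)
  also have "\<dots> \<longleftrightarrow> (\<forall>p. x (Inl p) = 0) \<and> (\<forall>k u. n \<le> k \<longrightarrow> x (Inr (k, u)) = 0)"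
    by (auto simp: fun_eq_iff split: if_splits)
  finally show ?thesis .
qed

lemma F_sp2: "y \<in> sp2 (Fr a n d) \<longleftrightarrow> (\<forall>s u. a \<le> s \<longrightarrow> y (Inl (s, u)) = 0) \<and>
   (\<forall>k j. n \<le> k \<or> d \<le> j \<longrightarrow> y (Inr (k, j)) = 0)"
proof -
  have "y \<in> sp2 (Fr a n d) \<longleftrightarrow>
    (\<forall>l. (if l < a then (\<lambda>u. y (Inl (l, u))) \<in> UNIV else (\<lambda>u. y (Inl (l, u))) = 0)) \<and>
    (\<forall>l. (if l < n then (\<lambda>j. y (Inr (l, j))) \<in> arrsp d else (\<lambda>j. y (Inr (l, j))) = 0))"
    by (simp add: dsum_def mult_rep_def P0_def P1_def comp_def)
  also have "\<dots> \<longleftrightarrow> (\<forall>s u. a \<le> s \<longrightarrow> y (Inl (s, u)) = 0) \<and>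
   (\<forall>k j. n \<le> k \<or> d \<le> j \<longrightarrow> y (Inr (k, j)) = 0)"
    by (auto simp: fun_eq_iff arrsp_def split: if_splits)
  finally show ?thesis .
qed

lemma F_arr: "arr (Fr a n d) i x = (\<lambda>z. case z of Inl _ \<Rightarrow> 0
    | Inr (k, j) \<Rightarrow> if k < n then x (Inr (k, ())) * gam i j else 0)"
  by (auto simp: fun_eq_iff dsum_def mult_rep_def P0_def P1_def fscale_def split: sum.splits)

lemma F_subspaces: "fsubspace (sp1 (Fr a n d))" "fsubspace (sp2 (Fr a n d))"
  by (rule FS.subspaceI; simp add: F_sp1 F_sp2)+

lemma F_arr_in: "i < d \<Longrightarrow> x \<in> sp1 (Fr a n d) \<Longrightarrow> arr (Fr a n d) i x \<in> sp2 (Fr a n d)"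
  unfolding F_sp2 F_arr by (auto simp: gam_def)

lemma iso_psi_injective:
  assumes rep: "is_rep d N" and iso: "is_iso d N (Fr a n d)"
  shows "psi_injective d N"
proof -
  obtain f1 f2 where f: "is_hom d N (Fr a n d) f1 f2" "bij_betw f1 (sp1 N) (sp1 (Fr a n d))"
    using iso unfolding is_iso_def by blast
  have LN: "\<forall>i<d. lin_on (sp1 N) (sp2 N) (arr N i)" and s1: "fsubspace (sp1 N)" and s2: "fsubspace (sp2 N)"
    using rep fin_dim_sub unfolding is_rep_def by auto
  have l1: "lin_on (sp1 N) (sp1 (Fr a n d)) f1" and l2: "lin_on (sp2 N) (sp2 (Fr a n d)) f2"
    and fa: "\<forall>i<d. \<forall>x\<in>sp1 N. f2 (arr N i x) = arr (Fr a n d) i (f1 x)"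
    using f(1) unfolding is_hom_def by auto
  show ?thesis
    unfolding psi_injective_iff[OF rep]
  proof (intro ballI impI)
    fix t assume t: "t \<in> tensor_sp d (sp1 N)" and pt: "psi d N t = 0"
    have tl: "(\<lambda>x. t (l, x)) \<in> sp1 N" if "l < d" for l using t that unfolding tensor_sp_iff by blast
    have "f2 (psi d N t) = (\<Sum>l<d. f2 (arr N l (\<lambda>x. t (l, x))))"
      unfolding psi_def using LN tl by (intro lin_on_sum[OF l2 s2]) (auto intro: lin_on_in)
    also have "\<dots> = (\<Sum>l<d. arr (Fr a n d) l (f1 (\<lambda>x. t (l, x))))"
      using fa tl by (intro sum.cong) auto
    finally have S: "(\<Sum>l<d. arr (Fr a n d) l (f1 (\<lambda>x. t (l, x)))) = 0"
      using pt lin_on_0[OF l2 s2] by simp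
    have z: "f1 (\<lambda>x. t (i, x)) = 0" if i: "i < d" for i
    proof -
      have mem: "f1 (\<lambda>x. t (i, x)) \<in> sp1 (Fr a n d)" using lin_on_in[OF l1 tl[OF i]] .
      show ?thesis
      proof
        fix z show "f1 (\<lambda>x. t (i, x)) z = 0 z"
        proof (cases z)
          case (Inl p) then show ?thesis using mem unfolding F_sp1 by (cases p) simp
        next
          case (Inr q)
          obtain k u where q: "q = (k, u)" by (cases q)
          show ?thesis
          proof (cases "k < n")
            case False then show ?thesis using mem Inr q unfolding F_sp1 by simp
          next
            case True
            have "(\<Sum>l<d. arr (Fr a n d) l (f1 (\<lambda>x. t (l, x)))) (Inr (k, i)) = 0" using S by simp
            then have "(\<Sum>l<d. f1 (\<lambda>x. t (l, x)) (Inr (k, ())) * gam l i) = 0"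
              using True by (simp add: sum_fun_apply F_arr)
            moreover have "(\<Sum>l<d. f1 (\<lambda>x. t (l, x)) (Inr (k, ())) * gam l i) = f1 (\<lambda>x. t (i, x)) (Inr (k, ()))"
              using i by (simp add: gam_def if_distrib sum.delta cong: if_cong)
            ultimately show ?thesis using Inr q by simp
          qed
        qed
      qed
    qed
    have "(\<lambda>x. t (i, x)) = 0" if i: "i < d" for i
    proof -
      have "f1 (\<lambda>x. t (i, x)) = f1 0" using z[OF i] lin_on_0[OF l1 s1] by simp
      then show ?thesis using bij_betw_imp_inj_on[OF f(2)] tl[OF i] FS.subspace_0[OF s1]
        by (meson inj_onD)
    qed
    then have A: "t (l, x) = 0" if "l < d" for l x using that by (metis zero_fun_apply)
    have B: "t (l, x) = 0" if "\<not> l < d" for l x using t that unfolding tensor_sp_iff by simp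
    show "t = 0"
    proof
      fix p show "t p = 0 p" using A B by (cases p) (metis zero_fun_apply)
    qed
  qed
qed

lemma lc_I2:
  assumes "finite A" "finite P"
  shows "lc (Inl ` A \<union> Inr ` P) c e = (\<Sum>s\<in>A. fscale (c (Inl s)) (e (Inl s))) + (\<Sum>p\<in>P. fscale (c (Inr p)) (e (Inr p)))"
proof -
  have "lc (Inl ` A \<union> Inr ` P) c e = (\<Sum>z\<in>Inl ` A. fscale (c z) (e z)) + (\<Sum>z\<in>Inr ` P. fscale (c z) (e z))"
    unfolding lc_def using assms by (intro sum.union_disjoint) auto
  also have "\<dots> = (\<Sum>s\<in>A. fscale (c (Inl s)) (e (Inl s))) + (\<Sum>p\<in>P. fscale (c (Inr p)) (e (Inr p)))"
    by (simp add: sum.reindex)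
  finally show ?thesis .
qed

lemma psi_injective_iso:
  fixes N :: "('i, 'j, 'k::field) krep"
  assumes rep: "is_rep d N" and inj: "psi_injective d N"
  shows "\<exists>a. int a = int (fdim (sp2 N)) - int d * int (fdim (sp1 N)) \<and> is_iso d N (Fr a (fdim (sp1 N)) d)"
proof -
  from struct[OF rep inj] obtain n m a u where st: "ibasis (sp1 N) {..<n} m" "n = fdim (sp1 N)" "\<forall>s<a. u s \<in> sp2 N"
     "ibasis (sp2 N) (Inl ` {..<a} \<union> Inr ` ({..<n} \<times> {..<d})) (case_sum u (\<lambda>(k,i). arr N i (m k)))"
     "a + n * d = fdim (sp2 N)"
    by (elim exE conjE)
  have LN: "\<forall>i<d. lin_on (sp1 N) (sp2 N) (arr N i)" and s1: "fsubspace (sp1 N)" and s2: "fsubspace (sp2 N)"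
    using rep fin_dim_sub unfolding is_rep_def by auto
  have mV: "m ` {..<n} \<subseteq> sp1 N" using st(1) unfolding ibasis_def by auto
  define I2 where "I2 = Inl ` {..<a} \<union> Inr ` ({..<n} \<times> {..<d})"
  define e2 where "e2 = case_sum u (\<lambda>(k,i). arr N i (m k))"
  have b2: "ibasis (sp2 N) I2 e2" using st(4) unfolding I2_def e2_def .
  have e2V: "e2 ` I2 \<subseteq> sp2 N" using b2 unfolding ibasis_def by auto
  define \<kappa> where "\<kappa> = case_sum (\<lambda>s. Inl (s, ())) (Inr :: nat \<times> nat \<Rightarrow> nat \<times> unit + nat \<times> nat)"
  define R1 where "R1 x = (\<lambda>k. x (Inr (k, ())))" for x :: "nat \<times> unit + nat \<times> unit \<Rightarrow> 'k"
  define R2 where "R2 y = (\<lambda>z. y (\<kappa> z))" for y :: "nat \<times> unit + nat \<times> nat \<Rightarrow> 'k"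
  define G1 where "G1 x = lc {..<n} (R1 x) m" for x
  define G2 where "G2 y = lc I2 (R2 y) e2" for y
  let ?F = "Fr a n d :: (_, _, 'k) krep"
  have bR1: "bij_betw R1 (sp1 ?F) {c. \<forall>z. z \<notin> {..<n} \<longrightarrow> c z = 0}"
  proof (rule bij_betw_byWitness[where f' = "\<lambda>c z. case z of Inl _ \<Rightarrow> 0 | Inr (k, _) \<Rightarrow> c k"])
    show "\<forall>x\<in>sp1 ?F. (\<lambda>z. case z of Inl _ \<Rightarrow> 0 | Inr (k, _) \<Rightarrow> R1 x k) = x"
      unfolding R1_def by (auto simp: fun_eq_iff F_sp1 split: sum.splits)
    show "\<forall>c\<in>{c. \<forall>z. z \<notin> {..<n} \<longrightarrow> c z = 0}. R1 (\<lambda>z. case z of Inl _ \<Rightarrow> 0 | Inr (k, _) \<Rightarrow> c k) = c"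
      unfolding R1_def by auto
    show "R1 ` sp1 ?F \<subseteq> {c. \<forall>z. z \<notin> {..<n} \<longrightarrow> c z = 0}"
      unfolding R1_def by (auto simp: F_sp1)
    show "(\<lambda>c z. case z of Inl _ \<Rightarrow> 0 | Inr (k, _) \<Rightarrow> c k) ` {c. \<forall>z. z \<notin> {..<n} \<longrightarrow> c z = 0} \<subseteq> sp1 ?F"
      by (auto simp: F_sp1)
  qed
  have bR2: "bij_betw R2 (sp2 ?F) {c. \<forall>z. z \<notin> I2 \<longrightarrow> c z = 0}"
  proof (rule bij_betw_byWitness[where f' = "\<lambda>c w. case w of Inl (s, _) \<Rightarrow> c (Inl s) | Inr p \<Rightarrow> c (Inr p)"])
    show "\<forall>y\<in>sp2 ?F. (\<lambda>w. case w of Inl (s, _) \<Rightarrow> R2 y (Inl s) | Inr p \<Rightarrow> R2 y (Inr p)) = y"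
      unfolding R2_def \<kappa>_def by (auto simp: fun_eq_iff F_sp2 split: sum.splits)
    show "\<forall>c\<in>{c. \<forall>z. z \<notin> I2 \<longrightarrow> c z = 0}. R2 (\<lambda>w. case w of Inl (s, _) \<Rightarrow> c (Inl s) | Inr p \<Rightarrow> c (Inr p)) = c"
      unfolding R2_def \<kappa>_def by (auto simp: fun_eq_iff split: sum.splits)
    show "R2 ` sp2 ?F \<subseteq> {c. \<forall>z. z \<notin> I2 \<longrightarrow> c z = 0}"
    proof (intro subsetI CollectI allI impI)
      fix c z assume c: "c \<in> R2 ` sp2 ?F" and z: "z \<notin> I2"
      then obtain y where y: "y \<in> sp2 ?F" "c = R2 y" by blast
      show "c z = 0"
      proof (cases z)
        case (Inl s) then have "a \<le> s" using z unfolding I2_def by (auto simp: image_iff)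
        then show ?thesis using y Inl unfolding R2_def \<kappa>_def F_sp2 by simp
      next
        case (Inr p)
        obtain k j where p: "p = (k, j)" by (cases p)
        have "n \<le> k \<or> d \<le> j" using z Inr p unfolding I2_def by (auto simp: image_iff)
        then show ?thesis using y Inr p unfolding R2_def \<kappa>_def F_sp2 by auto
      qed
    qed
    show "(\<lambda>c w. case w of Inl (s, _) \<Rightarrow> c (Inl s) | Inr p \<Rightarrow> c (Inr p)) ` {c. \<forall>z. z \<notin> I2 \<longrightarrow> c z = 0} \<subseteq> sp2 ?F"
      unfolding I2_def by (auto simp: F_sp2) (auto simp: image_iff)
  qed
  have bij1: "bij_betw G1 (sp1 ?F) (sp1 N)"
  proof -
    have "bij_betw ((\<lambda>c. lc {..<n} c m) \<circ> R1) (sp1 ?F) (sp1 N)"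
      by (rule bij_betw_trans[OF bR1 ibasis_bij[OF st(1) s1]])
    then show ?thesis unfolding G1_def comp_def .
  qed
  have bij2: "bij_betw G2 (sp2 ?F) (sp2 N)"
  proof -
    have "bij_betw ((\<lambda>c. lc I2 c e2) \<circ> R2) (sp2 ?F) (sp2 N)"
      by (rule bij_betw_trans[OF bR2 ibasis_bij[OF b2 s2]])
    then show ?thesis unfolding G2_def comp_def .
  qed
  have lin1: "lin_on (sp1 ?F) (sp1 N) G1"
    unfolding lin_on_def G1_def R1_def
    by (auto simp: lc_in_subspace[OF s1 mV] lc_add[symmetric] lc_scale[symmetric])
  have lin2: "lin_on (sp2 ?F) (sp2 N) G2"
    unfolding lin_on_def G2_def R2_def
    by (auto simp: lc_in_subspace[OF s2 e2V] lc_add[symmetric] lc_scale[symmetric])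
  have harr: "G2 (arr ?F i x) = arr N i (G1 x)" if i: "i < d" and x: "x \<in> sp1 ?F" for i x
  proof -
    have "G2 (arr ?F i x) = (\<Sum>s<a. fscale (R2 (arr ?F i x) (Inl s)) (e2 (Inl s))) +
       (\<Sum>p\<in>{..<n} \<times> {..<d}. fscale (R2 (arr ?F i x) (Inr p)) (e2 (Inr p)))"
      unfolding G2_def I2_def by (rule lc_I2) auto
    also have "\<dots> = (\<Sum>p\<in>{..<n} \<times> {..<d}. fscale (R2 (arr ?F i x) (Inr p)) (e2 (Inr p)))"
      unfolding R2_def \<kappa>_def F_arr by simp
    also have "\<dots> = (\<Sum>(k, j)\<in>{..<n} \<times> {..<d}. fscale (x (Inr (k, ())) * gam i j) (arr N j (m k)))"
      unfolding R2_def \<kappa>_def F_arr e2_def by (intro sum.cong refl) auto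
    also have "\<dots> = (\<Sum>k<n. \<Sum>j<d. fscale (x (Inr (k, ())) * gam i j) (arr N j (m k)))"
      by (rule sum.cartesian_product[symmetric])
    also have "\<dots> = (\<Sum>k<n. fscale (x (Inr (k, ()))) (arr N i (m k)))"
    proof (intro sum.cong refl)
      fix k
      have "(\<Sum>j<d. fscale (x (Inr (k, ())) * gam i j) (arr N j (m k))) =
          (\<Sum>j<d. if j = i then fscale (x (Inr (k, ()))) (arr N j (m k)) else 0)"
        by (intro sum.cong refl) (auto simp: gam_def)
      also have "\<dots> = fscale (x (Inr (k, ()))) (arr N i (m k))" using i by (simp add: sum.delta')
      finally show "(\<Sum>j<d. fscale (x (Inr (k, ())) * gam i j) (arr N j (m k))) =
          fscale (x (Inr (k, ()))) (arr N i (m k))" .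
    qed
    also have "\<dots> = lc {..<n} (R1 x) (\<lambda>k. arr N i (m k))" unfolding lc_def R1_def ..
    also have "\<dots> = arr N i (G1 x)" unfolding G1_def
      using LN i by (intro lin_on_lc[symmetric, OF _ s1 mV]) auto
    finally show ?thesis .
  qed
  have hom: "is_hom d ?F N G1 G2" unfolding is_hom_def using lin1 lin2 harr by blast
  have "is_iso d N ?F"
    by (rule iso_flip[OF hom bij1 bij2 F_subspaces]) (use F_arr_in in blast)
  moreover have "int a = int (fdim (sp2 N)) - int d * int (fdim (sp1 N))"
    using st(2,5) by (simp add: algebra_simps flip: of_nat_mult of_nat_add)
  ultimately show ?thesis using st(2) by blast
qed


lemma dual_add: "\<phi> \<in> dual_sp V \<Longrightarrow> x \<in> V \<Longrightarrow> y \<in> V \<Longrightarrow> \<phi> (x + y) = \<phi> x + \<phi> y"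
  unfolding dual_sp_def lin_on_def by (auto simp: fun_eq_iff)

lemma dual_scale: "\<phi> \<in> dual_sp V \<Longrightarrow> x \<in> V \<Longrightarrow> \<phi> (fscale c x) = c * \<phi> x"
  unfolding dual_sp_def lin_on_def by (auto simp: fun_eq_iff fscale_def)

lemma dual_out: "\<phi> \<in> dual_sp V \<Longrightarrow> x \<notin> V \<Longrightarrow> \<phi> x = 0"
  unfolding dual_sp_def by auto

lemma dual_lin: "\<phi> \<in> dual_sp V \<Longrightarrow> lin_on V (UNIV :: (unit \<Rightarrow> 'k) set) (\<lambda>x u. (\<phi> x :: 'k::field))"
  unfolding dual_sp_def by auto

lemma dual_zero: "\<phi> \<in> dual_sp V \<Longrightarrow> fsubspace V \<Longrightarrow> \<phi> 0 = 0"
  using lin_on_0[OF dual_lin] by (metis zero_fun_apply)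

lemma dual_sum:
  assumes "\<phi> \<in> dual_sp V" "fsubspace V" "\<And>z. z \<in> I \<Longrightarrow> x z \<in> V"
  shows "\<phi> (\<Sum>z\<in>I. x z) = (\<Sum>z\<in>I. \<phi> (x z))"
proof -
  have E: "(\<lambda>u::unit. \<phi> (\<Sum>z\<in>I. x z)) = (\<Sum>z\<in>I. (\<lambda>u::unit. \<phi> (x z)))"
    by (rule lin_on_sum[OF dual_lin[OF assms(1)] assms(2,3)])
  show ?thesis using fun_cong[OF E, of "()"] by (simp add: sum_fun_apply)
qed

lemma dual_diff:
  assumes "\<phi> \<in> dual_sp V" "fsubspace V" "x \<in> V" "y \<in> V"
  shows "\<phi> (x - y) = \<phi> x - \<phi> y"
proof -
  have "(\<lambda>u::unit. \<phi> (x - y)) = (\<lambda>u. \<phi> x) - (\<lambda>u. \<phi> y)"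
    by (rule lin_on_diff[OF dual_lin[OF assms(1)] assms(2,3,4)])
  then show ?thesis by (metis minus_apply)
qed

lemma dualI:
  assumes "\<And>x y. x \<in> V \<Longrightarrow> y \<in> V \<Longrightarrow> \<phi> (x + y) = \<phi> x + \<phi> y"
    "\<And>c x. x \<in> V \<Longrightarrow> \<phi> (fscale c x) = c * \<phi> x" "\<And>x. x \<notin> V \<Longrightarrow> \<phi> x = 0"
  shows "\<phi> \<in> dual_sp V"
  unfolding dual_sp_def lin_on_def using assms by (auto simp: fun_eq_iff fscale_def)

lemma subspace_dual: "fsubspace (dual_sp V)"
proof (rule FS.subspaceI)
  show "0 \<in> dual_sp V" by (rule dualI) auto
next
  fix x y assume "x \<in> dual_sp V" "y \<in> dual_sp V"
  then show "x + y \<in> dual_sp V" by (intro dualI) (auto simp: dual_add dual_scale dual_out algebra_simps)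
next
  fix c x assume "x \<in> dual_sp V"
  then show "fscale c x \<in> dual_sp V" by (intro dualI) (auto simp: dual_add dual_scale dual_out algebra_simps)
qed

definition K1 :: "nat \<Rightarrow> (nat \<Rightarrow> 'k::field) set \<Rightarrow> (nat \<times> unit \<Rightarrow> 'k) set" where
  "K1 r v = sp1 (shift r (Crep r v))"

definition K2 :: "nat \<Rightarrow> (nat \<Rightarrow> 'k::field) set \<Rightarrow> (nat \<times> (nat \<times> unit) \<Rightarrow> 'k) set" where
  "K2 r v = sp1 (tau r (Crep r v))"

definition unemb :: "nat \<Rightarrow> (nat \<times> unit \<Rightarrow> 'k::field) \<Rightarrow> (nat \<Rightarrow> 'k)" where
  "unemb r c = (\<lambda>j. if j < r then c (j, ()) else 0)"

definition emb :: "(nat \<Rightarrow> 'k::field) \<Rightarrow> (nat \<times> unit \<Rightarrow> 'k)" where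
  "emb a = (\<lambda>p. a (fst p))"

definition lam :: "nat \<Rightarrow> (nat \<times> (nat \<times> unit) \<Rightarrow> 'k::field) \<Rightarrow> 'k" where
  "lam r G = (\<Sum>l<r. G (l, (l, ())))"

definition injl :: "nat \<Rightarrow> (nat \<times> unit \<Rightarrow> 'k::field) \<Rightarrow> (nat \<times> (nat \<times> unit) \<Rightarrow> 'k)" where
  "injl l x = (\<lambda>(l', y). if l' = l then x y else 0)"

lemma shift_simps[simp]:
  "sp1 (shift r M) = {f \<in> tensor_sp r (sp1 M). psi r M f = 0}" "sp2 (shift r M) = sp1 M"
  "arr (shift r M) i f = (\<lambda>x. f (i, x))"
  by (simp_all add: shift_def)

lemma Erep_simps:
  "sp1 (Erep r v) = dual_sp (K1 r v)" "sp2 (Erep r v) = dual_sp (K2 r v)"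
  "arr (Erep r v) i \<phi> = (\<lambda>F. if F \<in> K2 r v then \<phi> (\<lambda>y. F (i, y)) else 0)"
proof -
  show "sp1 (Erep r v) = dual_sp (K1 r v)" "sp2 (Erep r v) = dual_sp (K2 r v)"
    by (simp_all add: Erep_def Dual_def tau_def K1_def K2_def)
  have "arr (Erep r v) i \<phi> = (\<lambda>F. if F \<in> sp1 (tau r (Crep r v)) then \<phi> (arr (tau r (Crep r v)) i F) else 0)"
    by (simp add: Erep_def Dual_def del: shift_simps)
  also have "\<dots> = (\<lambda>F. if F \<in> K2 r v then \<phi> (\<lambda>y. F (i, y)) else 0)"
    unfolding K2_def tau_def by (simp only: shift_simps(3))
  finally show "arr (Erep r v) i \<phi> = (\<lambda>F. if F \<in> K2 r v then \<phi> (\<lambda>y. F (i, y)) else 0)" .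
qed

lemma K2_def2: "K2 r v = {F \<in> tensor_sp r (K1 r v). lam r F = 0}"
proof -
  have "psi r (shift r (Crep r v)) F = (\<lambda>u. \<Sum>l<r. F (l, (l, u)))" for F
    unfolding psi_def by (simp add: sum_fun_apply fun_eq_iff)
  moreover have "((\<lambda>u::unit. \<Sum>l<r. F (l, (l, u))) = 0) \<longleftrightarrow> lam r F = 0" for F :: "_ \<Rightarrow> 'a"
    unfolding lam_def by (auto simp: fun_eq_iff)
  ultimately show ?thesis unfolding K2_def K1_def tau_def by auto
qed

lemma sum_gam: "(\<Sum>l<r. f l * gam l j) = (if j < r then f j else 0)"
proof -
  have "(\<Sum>l<r. f l * gam l j) = (\<Sum>l<r. if l = j then f l else 0)"
    by (rule sum.cong) (auto simp: gam_def)
  then show ?thesis by (simp add: sum.delta')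
qed

lemma unemb_arrsp: "unemb r c \<in> arrsp r"
  by (simp add: unemb_def arrsp_def)

lemma unemb_sum: "unemb r c = (\<Sum>l<r. fscale (c (l, ())) (gam l))"
proof
  fix j
  have "(\<Sum>l<r. fscale (c (l, ())) (gam l)) j = (\<Sum>l<r. c (l, ()) * gam l j)"
    by (simp add: sum_fun_apply)
  also have "\<dots> = unemb r c j" by (simp add: unemb_def sum_gam)
  finally show "unemb r c j = (\<Sum>l<r. fscale (c (l, ())) (gam l)) j" by simp
qed

lemma annih_sub: "\<phi> \<in> annih r v \<Longrightarrow> \<phi> \<in> dual_sp (arrsp r)"
  unfolding annih_def by simp

lemma psi_Crep: "psi r (Crep r v) c = quot_proj r v (unemb r c)"
proof
  fix \<phi>
  have "psi r (Crep r v) c \<phi> = (\<Sum>l<r. quot_proj r v (fscale (c (l, ())) (gam l)) \<phi>)"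
    unfolding psi_def Crep_def by (simp add: sum_fun_apply)
  also have "\<dots> = (if \<phi> \<in> annih r v then (\<Sum>l<r. \<phi> (fscale (c (l, ())) (gam l))) else 0)"
    unfolding quot_proj_def by simp
  also have "\<dots> = quot_proj r v (unemb r c) \<phi>"
  proof (cases "\<phi> \<in> annih r v")
    case True
    have "\<phi> (unemb r c) = (\<Sum>l<r. \<phi> (fscale (c (l, ())) (gam l)))"
      unfolding unemb_sum
      by (rule dual_sum[OF annih_sub[OF True] subspace_arrsp])
        (auto intro: FS.subspace_scale[OF subspace_arrsp] gam_arrsp)
    then show ?thesis using True unfolding quot_proj_def by simp
  next
    case False then show ?thesis unfolding quot_proj_def by simp
  qed
  finally show "psi r (Crep r v) c \<phi> = quot_proj r v (unemb r c) \<phi>" .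
qed

lemma separation:
  assumes v: "fsubspace v" "v \<subseteq> arrsp r" and a: "a \<in> arrsp r" "a \<notin> v"
  shows "\<exists>\<phi>\<in>annih r v. \<phi> a \<noteq> 0"
proof -
  have vs: "v \<subseteq> FS.span (gam ` {..<r})" using v(2) arrsp_span by blast
  obtain b where b: "ibasis v {..<fdim v} b" using ibasis_exists[OF v(1) _ vs] by blast
  have bv: "b ` {..<fdim v} \<subseteq> v" and indb: "iindep {..<fdim v} b" using b unfolding ibasis_def by auto
  have e1: "finite {..<fdim v}" by simp
  have e2: "b ` {..<fdim v} \<subseteq> arrsp r" using bv v(2) by blast
  from ibasis_extend[OF subspace_arrsp finite_imageI[OF finite_lessThan] arrsp_span e1 e2 indb]
  obtain q w where qw: "\<forall>s<q. w s \<in> arrsp r"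
    "ibasis (arrsp r) (Inl ` {..<q} \<union> Inr ` {..<fdim v}) (case_sum w b)"
    "q + card {..<fdim v} = fdim (arrsp r :: (nat \<Rightarrow> 'a) set)"
    by (elim exE conjE)
  let ?I = "Inl ` {..<q} \<union> Inr ` {..<fdim v}" and ?h = "case_sum w b"
  obtain c where c: "a = lc ?I c ?h" using qw(2) a(1) unfolding ibasis_def by blast
  have "\<exists>s<q. c (Inl s) \<noteq> 0"
  proof (rule ccontr)
    assume nz: "\<not> (\<exists>s<q. c (Inl s) \<noteq> 0)"
    then have "a = (\<Sum>s<q. fscale (c (Inl s)) (?h (Inl s))) + (\<Sum>j<fdim v. fscale (c (Inr j)) (?h (Inr j)))"
      using c lc_I2[of "{..<q}" "{..<fdim v}" c ?h] by simp
    also have "\<dots> = lc {..<fdim v} (\<lambda>j. c (Inr j)) b" using nz unfolding lc_def by simp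
    finally have "a \<in> v" using lc_in_subspace[OF v(1) bv] by simp
    then show False using a(2) by simp
  qed
  then obtain s0 where s0: "s0 < q" "c (Inl s0) \<noteq> 0" by blast
  obtain \<phi>0 where \<phi>0: "lin_on (arrsp r) (UNIV :: (unit \<Rightarrow> 'a) set) \<phi>0" "\<forall>c. \<phi>0 (lc ?I c ?h) () = c (Inl s0)"
    using coordfun[OF qw(2) subspace_arrsp, of "Inl s0"] s0(1) by blast
  define \<phi> where "\<phi> x = (if x \<in> arrsp r then \<phi>0 x () else 0)" for x
  have \<phi>d: "\<phi> \<in> dual_sp (arrsp r)"
  proof (rule dualI)
    fix x y :: "nat \<Rightarrow> 'a" assume xy: "x \<in> arrsp r" "y \<in> arrsp r"
    have s: "x + y \<in> arrsp r" using FS.subspace_add[OF subspace_arrsp xy] .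
    show "\<phi> (x + y) = \<phi> x + \<phi> y" unfolding \<phi>_def
      using lin_on_add[OF \<phi>0(1) xy] s xy by simp
  next
    fix e and x :: "nat \<Rightarrow> 'a" assume x: "x \<in> arrsp r"
    have s: "fscale e x \<in> arrsp r" using FS.subspace_scale[OF subspace_arrsp x] .
    show "\<phi> (fscale e x) = e * \<phi> x" unfolding \<phi>_def
      using lin_on_scale[OF \<phi>0(1) x] s x by simp
  next
    fix x :: "nat \<Rightarrow> 'a" assume "x \<notin> arrsp r" then show "\<phi> x = 0" unfolding \<phi>_def by simp
  qed
  have "\<phi> y = 0" if y: "y \<in> v" for y
  proof -
    obtain e where e: "y = lc {..<fdim v} e b" using b y unfolding ibasis_def by blast
    let ?e = "case_sum (\<lambda>_::nat. 0) e"
    have "lc ?I ?e ?h = (\<Sum>s<q. fscale (?e (Inl s)) (?h (Inl s))) + (\<Sum>j<fdim v. fscale (?e (Inr j)) (?h (Inr j)))"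
      by (rule lc_I2[OF finite_lessThan finite_lessThan])
    also have "\<dots> = y" unfolding e lc_def by simp
    finally have "\<phi>0 y () = ?e (Inl s0)" using \<phi>0(2) by metis
    then show ?thesis unfolding \<phi>_def by simp
  qed
  then have "\<phi> \<in> annih r v" using \<phi>d unfolding annih_def by blast
  moreover have "\<phi> a = c (Inl s0)" unfolding \<phi>_def using a(1) c \<phi>0(2) by simp
  ultimately show ?thesis using s0(2) by metis
qed

lemma K1_char:
  assumes v: "fsubspace v" "v \<subseteq> arrsp r"
  shows "c \<in> K1 r v \<longleftrightarrow> (\<forall>l u. r \<le> l \<longrightarrow> c (l, u) = 0) \<and> unemb r c \<in> v"
proof -
  have t: "c \<in> tensor_sp r (UNIV :: (unit \<Rightarrow> 'a) set) \<longleftrightarrow> (\<forall>l u. r \<le> l \<longrightarrow> c (l, u) = 0)"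
    unfolding tensor_sp_iff by simp
  have "quot_proj r v (unemb r c) = 0 \<longleftrightarrow> unemb r c \<in> v"
  proof
    assume q: "quot_proj r v (unemb r c) = 0"
    show "unemb r c \<in> v"
    proof (rule ccontr)
      assume "unemb r c \<notin> v"
      then obtain \<phi> where "\<phi> \<in> annih r v" "\<phi> (unemb r c) \<noteq> 0"
        using separation[OF v unemb_arrsp] by blast
      then have "quot_proj r v (unemb r c) \<phi> \<noteq> 0" unfolding quot_proj_def by simp
      then show False using q by simp
    qed
  next
    assume "unemb r c \<in> v"
    then show "quot_proj r v (unemb r c) = 0" unfolding quot_proj_def annih_def by (auto simp: fun_eq_iff)
  qed
  then show ?thesis unfolding K1_def using t psi_Crep[of r v c] by (simp add: Crep_def)
qed

lemma subspace_K1: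
  assumes v: "fsubspace v" "v \<subseteq> arrsp r"
  shows "fsubspace (K1 r v)"
proof (rule FS.subspaceI)
  have u0: "unemb r 0 = 0" by (simp add: unemb_def fun_eq_iff)
  show "0 \<in> K1 r v" unfolding K1_char[OF v] u0 using FS.subspace_0[OF v(1)] by simp
next
  fix x y assume "x \<in> K1 r v" "y \<in> K1 r v"
  moreover have "unemb r (x + y) = unemb r x + unemb r y" by (simp add: unemb_def fun_eq_iff)
  ultimately show "x + y \<in> K1 r v" unfolding K1_char[OF v] using FS.subspace_add[OF v(1)] by simp
next
  fix c x assume "x \<in> K1 r v"
  moreover have "unemb r (fscale c x) = fscale c (unemb r x)" by (simp add: unemb_def fun_eq_iff)
  ultimately show "fscale c x \<in> K1 r v" unfolding K1_char[OF v] using FS.subspace_scale[OF v(1)] by simp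
qed

lemma subspace_K2:
  assumes v: "fsubspace v" "v \<subseteq> arrsp r"
  shows "fsubspace (K2 r v)"
proof -
  have T: "fsubspace (tensor_sp r (K1 r v))" by (rule subspace_tensor_sp[OF subspace_K1[OF v]])
  show ?thesis
  proof (rule FS.subspaceI)
  show "0 \<in> K2 r v" unfolding K2_def2 lam_def using FS.subspace_0[OF T] by simp
next
  fix x y assume "x \<in> K2 r v" "y \<in> K2 r v"
  then show "x + y \<in> K2 r v" unfolding K2_def2 lam_def using FS.subspace_add[OF T]
    by (simp add: sum.distrib)
next
  fix c x assume "x \<in> K2 r v"
  then show "fscale c x \<in> K2 r v" unfolding K2_def2 lam_def using FS.subspace_scale[OF T]
    by (simp add: sum_distrib_left[symmetric])
qed
qed

lemma emb_unemb: "(\<forall>l u. r \<le> l \<longrightarrow> c (l, u) = 0) \<Longrightarrow> emb (unemb r c) = c"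
  by (auto simp: emb_def unemb_def fun_eq_iff)

lemma unemb_emb: "a \<in> arrsp r \<Longrightarrow> unemb r (emb a) = a"
  by (auto simp: emb_def unemb_def fun_eq_iff arrsp_def)

lemma emb_in_K1:
  assumes v: "fsubspace v" "v \<subseteq> arrsp r" and a: "a \<in> v"
  shows "emb a \<in> K1 r v"
  unfolding K1_char[OF v] using a v(2) unemb_emb[of a r] by (auto simp: emb_def arrsp_def)


definition alinv :: "nat \<Rightarrow> ((nat \<Rightarrow> 'k::field) \<Rightarrow> (nat \<Rightarrow> 'k)) \<Rightarrow> (nat \<Rightarrow> 'k) \<Rightarrow> (nat \<Rightarrow> 'k)" where
  "alinv d \<alpha> = inv_into (arrsp d) \<alpha>"

definition beta :: "((nat \<Rightarrow> 'k::field) \<Rightarrow> (nat \<Rightarrow> 'k)) \<Rightarrow> nat \<Rightarrow> (nat \<times> unit \<Rightarrow> 'k)" where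
  "beta \<alpha> j = emb (\<alpha> (gam j))"

definition delta :: "nat \<Rightarrow> nat \<Rightarrow> (nat \<Rightarrow> 'k::field) set \<Rightarrow> ((nat \<Rightarrow> 'k) \<Rightarrow> (nat \<Rightarrow> 'k)) \<Rightarrow> nat
    \<Rightarrow> (nat \<times> unit \<Rightarrow> 'k) \<Rightarrow> 'k" where
  "delta r d v \<alpha> j = (\<lambda>x. if x \<in> K1 r v then alinv d \<alpha> (unemb r x) j else 0)"

definition slice :: "(nat \<times> 'a \<Rightarrow> 'k) \<Rightarrow> nat \<Rightarrow> ('a \<Rightarrow> 'k)" where
  "slice F i = (\<lambda>y. F (i, y))"

lemma emb_lc: "emb (lc I c e) = lc I c (\<lambda>j. emb (e j))"
  unfolding emb_def lc_def by (simp add: fun_eq_iff sum_fun_apply)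

lemma tensor_slice: "G \<in> tensor_sp r V \<Longrightarrow> i < r \<Longrightarrow> slice G i \<in> V"
  unfolding tensor_sp_iff slice_def by blast

context
  fixes r d :: nat and v :: "(nat \<Rightarrow> 'k::field) set" and \<alpha> :: "(nat \<Rightarrow> 'k) \<Rightarrow> (nat \<Rightarrow> 'k)"
  assumes v: "fsubspace v" "v \<subseteq> arrsp r" and al: "inj_arr d r \<alpha>" "\<alpha> ` arrsp d = v" and d1: "1 \<le> d"
begin

lemma al_lin: "lin_on (arrsp d) v \<alpha>"
  using al unfolding inj_arr_def lin_on_def by blast

lemma al_bij: "bij_betw \<alpha> (arrsp d) v"
  using al unfolding inj_arr_def bij_betw_def by blast

lemma alinv_lin: "lin_on v (arrsp d) (alinv d \<alpha>)"
  unfolding alinv_def by (rule lin_on_inv[OF al_lin al_bij subspace_arrsp])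

lemma alinv_al: "c \<in> arrsp d \<Longrightarrow> alinv d \<alpha> (\<alpha> c) = c"
  unfolding alinv_def using al_bij by (simp add: bij_betw_inv_into_left)

lemma al_alinv: "a \<in> v \<Longrightarrow> \<alpha> (alinv d \<alpha> a) = a"
  unfolding alinv_def using al_bij by (simp add: bij_betw_inv_into_right)

lemma al_lc: "c \<in> arrsp d \<Longrightarrow> \<alpha> c = lc {..<d} c (\<lambda>j. \<alpha> (gam j))"
proof -
  assume c: "c \<in> arrsp d"
  have "\<alpha> c = \<alpha> (lc {..<d} c gam)" using arrsp_lc[OF c] by simp
  also have "\<dots> = lc {..<d} c (\<lambda>j. \<alpha> (gam j))"
    by (rule lin_on_lc[OF al_lin subspace_arrsp]) (auto intro: gam_arrsp)
  finally show ?thesis .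
qed

lemma al_gam_v: "j < d \<Longrightarrow> \<alpha> (gam j) \<in> v"
  using al(2) gam_arrsp by blast

lemma beta_K1: "j < d \<Longrightarrow> beta \<alpha> j \<in> K1 r v"
  unfolding beta_def by (rule emb_in_K1[OF v al_gam_v])

lemma beta_apply: "beta \<alpha> j (i, u) = \<alpha> (gam j) i"
  unfolding beta_def emb_def by simp

lemma K1_facts: "x \<in> K1 r v \<Longrightarrow> unemb r x \<in> v \<and> (\<forall>l u. r \<le> l \<longrightarrow> x (l, u) = 0)"
  using K1_char[OF v] by blast

lemma delta_dual: "delta r d v \<alpha> j \<in> dual_sp (K1 r v)"
proof (rule dualI)
  fix x y assume xy: "x \<in> K1 r v" "y \<in> K1 r v"
  have s: "x + y \<in> K1 r v" using FS.subspace_add[OF subspace_K1[OF v] xy] .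
  have u: "unemb r (x + y) = unemb r x + unemb r y" by (simp add: unemb_def fun_eq_iff)
  have "alinv d \<alpha> (unemb r x + unemb r y) = alinv d \<alpha> (unemb r x) + alinv d \<alpha> (unemb r y)"
    using lin_on_add[OF alinv_lin] K1_facts xy by blast
  then show "delta r d v \<alpha> j (x + y) = delta r d v \<alpha> j x + delta r d v \<alpha> j y"
    unfolding delta_def using s xy u by simp
next
  fix c x assume x: "x \<in> K1 r v"
  have s: "fscale c x \<in> K1 r v" using FS.subspace_scale[OF subspace_K1[OF v] x] .
  have u: "unemb r (fscale c x) = fscale c (unemb r x)" by (simp add: unemb_def fun_eq_iff)
  have "alinv d \<alpha> (fscale c (unemb r x)) = fscale c (alinv d \<alpha> (unemb r x))"
    using lin_on_scale[OF alinv_lin] K1_facts x by blast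
  then show "delta r d v \<alpha> j (fscale c x) = c * delta r d v \<alpha> j x"
    unfolding delta_def using s x u by simp
next
  fix x assume "x \<notin> K1 r v" then show "delta r d v \<alpha> j x = 0" unfolding delta_def by simp
qed

lemma K1_expand: "x \<in> K1 r v \<Longrightarrow> x = (\<Sum>j<d. fscale (delta r d v \<alpha> j x) (beta \<alpha> j))"
proof -
  assume x: "x \<in> K1 r v"
  have uv: "unemb r x \<in> v" and t: "\<forall>l u. r \<le> l \<longrightarrow> x (l, u) = 0" using K1_facts[OF x] by auto
  have ad: "alinv d \<alpha> (unemb r x) \<in> arrsp d" using lin_on_in[OF alinv_lin uv] .
  have "x = emb (unemb r x)" using emb_unemb[OF t] by simp
  also have "\<dots> = emb (\<alpha> (alinv d \<alpha> (unemb r x)))" using al_alinv[OF uv] by simp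
  also have "\<dots> = emb (lc {..<d} (alinv d \<alpha> (unemb r x)) (\<lambda>j. \<alpha> (gam j)))" using al_lc[OF ad] by simp
  also have "\<dots> = lc {..<d} (alinv d \<alpha> (unemb r x)) (beta \<alpha>)" unfolding emb_lc beta_def ..
  also have "\<dots> = (\<Sum>j<d. fscale (delta r d v \<alpha> j x) (beta \<alpha> j))"
    unfolding lc_def delta_def using x by simp
  finally show ?thesis .
qed

lemma delta_beta: "j < d \<Longrightarrow> j' < d \<Longrightarrow> delta r d v \<alpha> j (beta \<alpha> j') = (if j = j' then 1 else 0)"
proof -
  assume j: "j < d" "j' < d"
  have a: "\<alpha> (gam j') \<in> arrsp r" using al_gam_v[OF j(2)] v(2) by blast
  have "delta r d v \<alpha> j (beta \<alpha> j') = alinv d \<alpha> (\<alpha> (gam j')) j"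
    unfolding delta_def using beta_K1[OF j(2)] unemb_emb[OF a] by (simp add: beta_def)
  also have "\<dots> = gam j' j" using alinv_al[OF gam_arrsp[OF j(2)]] by simp
  finally show ?thesis by (simp add: gam_def)
qed

lemma K1_coord: "x \<in> K1 r v \<Longrightarrow> x (i, ()) = (\<Sum>j<d. \<alpha> (gam j) i * delta r d v \<alpha> j x)"
proof -
  assume x: "x \<in> K1 r v"
  have "x (i, ()) = (\<Sum>j<d. fscale (delta r d v \<alpha> j x) (beta \<alpha> j)) (i, ())"
    using K1_expand[OF x] by metis
  also have "\<dots> = (\<Sum>j<d. \<alpha> (gam j) i * delta r d v \<alpha> j x)"
    by (simp add: sum_fun_apply beta_apply mult.commute)
  finally show ?thesis .
qed

lemma w_exists: "\<exists>l0<r. \<exists>w\<in>K1 r v. w (l0, ()) = 1"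
proof -
  have g0: "gam 0 \<in> arrsp d" using d1 by (intro gam_arrsp) simp
  have "gam 0 \<noteq> (0 :: nat \<Rightarrow> 'k)" by (simp add: gam_def fun_eq_iff)
  moreover have "\<alpha> 0 = 0" using lin_on_0[OF al_lin subspace_arrsp] .
  moreover have "inj_on \<alpha> (arrsp d)" using al unfolding inj_arr_def by blast
  ultimately have nz: "\<alpha> (gam 0) \<noteq> 0" using g0 FS.subspace_0[OF subspace_arrsp] by (metis inj_onD)
  then obtain l0 where l0: "\<alpha> (gam 0) l0 \<noteq> 0" by (auto simp: fun_eq_iff)
  have "\<alpha> (gam 0) \<in> arrsp r" using al_gam_v[of 0] d1 v(2) by auto
  then have lr: "l0 < r" using l0 unfolding arrsp_def using not_less by blast
  define w where "w = fscale (1 / \<alpha> (gam 0) l0) (beta \<alpha> 0)"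
  have "w \<in> K1 r v" unfolding w_def using beta_K1[of 0] d1 FS.subspace_scale[OF subspace_K1[OF v]] by auto
  moreover have "w (l0, ()) = 1" unfolding w_def using l0 by (simp add: beta_apply)
  ultimately show ?thesis using lr by blast
qed

end


definition Wv :: "nat \<Rightarrow> (nat \<Rightarrow> 'k::field) set \<Rightarrow> (nat \<times> (nat \<times> unit) \<Rightarrow> 'k)" where
  "Wv r v = (SOME W. W \<in> tensor_sp r (K1 r v) \<and> lam r W = 1)"

definition Pm :: "nat \<Rightarrow> (nat \<Rightarrow> 'k::field) set \<Rightarrow> (nat \<times> (nat \<times> unit) \<Rightarrow> 'k) \<Rightarrow> (nat \<times> (nat \<times> unit) \<Rightarrow> 'k)" where
  "Pm r v G = G - fscale (lam r G) (Wv r v)"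

lemma slice_injl: "slice (injl l x) i = (if i = l then x else 0)"
  unfolding slice_def injl_def by (auto simp: fun_eq_iff)

lemma lam_injl: "l < r \<Longrightarrow> lam r (injl l x) = x (l, ())"
  unfolding lam_def injl_def by (simp add: sum.delta')

lemma lam_add: "lam r (G + H) = lam r G + lam r H"
  unfolding lam_def by (simp add: sum.distrib)

lemma lam_diff: "lam r (G - H) = lam r G - lam r H"
  unfolding lam_def by (simp add: sum_subtractf)

lemma lam_scale: "lam r (fscale c G) = c * lam r G"
  unfolding lam_def by (simp add: sum_distrib_left)

lemma lam_sum: "lam r (\<Sum>i\<in>I. G i) = (\<Sum>i\<in>I. lam r (G i))"
  unfolding lam_def by (simp add: sum_fun_apply sum.swap[of _ "{..<r}"])

lemma injl_tensor:
  assumes "fsubspace V" "l < r" "x \<in> V"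
  shows "injl l x \<in> tensor_sp r V"
  unfolding tensor_sp_iff
proof (intro conjI allI impI)
  fix i assume "i < r"
  have "(\<lambda>y. injl l x (i, y)) = slice (injl l x) i" unfolding slice_def ..
  then show "(\<lambda>y. injl l x (i, y)) \<in> V" using assms FS.subspace_0[OF assms(1)] by (simp add: slice_injl)
next
  fix i y assume "r \<le> i" then show "injl l x (i, y) = 0" using assms(2) unfolding injl_def by simp
qed

lemma injl_add: "injl l (x + y) = injl l x + injl l y"
  unfolding injl_def by (auto simp: fun_eq_iff)

lemma injl_scale: "injl l (fscale c x) = fscale c (injl l x)"
  unfolding injl_def by (auto simp: fun_eq_iff)

lemma sum_injl:
  fixes G :: "nat \<times> (nat \<times> unit) \<Rightarrow> 'k::field"
  assumes G: "G \<in> tensor_sp r V"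
  shows "(\<Sum>i<r. injl i (slice G i)) = G"
proof
  fix p :: "nat \<times> (nat \<times> unit)"
  obtain l y where p: "p = (l, y)" by (cases p)
  have "(\<Sum>i<r. injl i (slice G i)) p = (\<Sum>i<r. if l = i then G (l, y) else 0)"
    unfolding p by (simp add: sum_fun_apply injl_def slice_def)
  also have "\<dots> = G p" using G unfolding p tensor_sp_iff by (cases y) (auto simp: sum.delta)
  finally show "(\<Sum>i<r. injl i (slice G i)) p = G p" .
qed

context
  fixes r d :: nat and v :: "(nat \<Rightarrow> 'k::field) set" and \<alpha> :: "(nat \<Rightarrow> 'k) \<Rightarrow> (nat \<Rightarrow> 'k)"
  assumes v: "fsubspace v" "v \<subseteq> arrsp r" and al: "inj_arr d r \<alpha>" "\<alpha> ` arrsp d = v" and d1: "1 \<le> d"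
begin

lemma K1s: "fsubspace (K1 r v)" by (rule subspace_K1[OF v])
lemma K2s: "fsubspace (K2 r v)" by (rule subspace_K2[OF v])
lemma Ts: "fsubspace (tensor_sp r (K1 r v))" by (rule subspace_tensor_sp[OF K1s])

lemma W_facts: "Wv r v \<in> tensor_sp r (K1 r v) \<and> lam r (Wv r v) = 1"
proof -
  obtain l0 w where lw: "l0 < r" "w \<in> K1 r v" "w (l0, ()) = 1" using w_exists[OF v al d1] by blast
  have "lam r (injl l0 w) = w (l0, ())" by (rule lam_injl[OF lw(1)])
  then have "injl l0 w \<in> tensor_sp r (K1 r v) \<and> lam r (injl l0 w) = 1"
    using injl_tensor[OF K1s lw(1,2)] lw(3) by simp
  then show ?thesis unfolding Wv_def by (rule someI[where P="\<lambda>W. W \<in> tensor_sp r (K1 r v) \<and> lam r W = 1"])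
qed

lemma P_K2: "G \<in> tensor_sp r (K1 r v) \<Longrightarrow> Pm r v G \<in> K2 r v"
proof -
  assume G: "G \<in> tensor_sp r (K1 r v)"
  have "Pm r v G \<in> tensor_sp r (K1 r v)" unfolding Pm_def
    using G W_facts FS.subspace_diff[OF Ts] FS.subspace_scale[OF Ts] by blast
  moreover have "lam r (Pm r v G) = 0" unfolding Pm_def lam_diff lam_scale using W_facts by simp
  ultimately show ?thesis unfolding K2_def2 by blast
qed

lemma P_id: "G \<in> K2 r v \<Longrightarrow> Pm r v G = G"
  unfolding Pm_def K2_def2 by simp

lemma P_sum: "Pm r v (\<Sum>i\<in>I. G i) = (\<Sum>i\<in>I. Pm r v (G i))"
  unfolding Pm_def lam_sum by (simp add: sum_subtractf FS.scale_sum_left)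

lemma P_add: "Pm r v (G + H) = Pm r v G + Pm r v H"
  unfolding Pm_def lam_add by (simp add: FS.scale_left_distrib algebra_simps)

lemma P_scale: "Pm r v (fscale c G) = fscale c (Pm r v G)"
  unfolding Pm_def lam_scale by (simp add: FS.scale_right_diff_distrib FS.scale_scale)

lemma slice_P: "slice (Pm r v G) i = slice G i - fscale (lam r G) (slice (Wv r v) i)"
  unfolding Pm_def slice_def by (simp add: fun_eq_iff)

lemma W_slice: "i < r \<Longrightarrow> slice (Wv r v) i \<in> K1 r v"
  using W_facts tensor_slice by blast

lemma arrE_dual:
  assumes "\<phi> \<in> dual_sp (K1 r v)" "i < r"
  shows "arr (Erep r v) i \<phi> \<in> dual_sp (K2 r v)"
proof -
  have sl: "(\<lambda>y. F (i, y)) \<in> K1 r v" if "F \<in> K2 r v" for F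
    using that assms(2) unfolding K2_def2 tensor_sp_iff by blast
  show ?thesis unfolding Erep_simps
  proof (rule dualI)
    fix x y assume xy: "x \<in> K2 r v" "y \<in> K2 r v"
    have "x + y \<in> K2 r v" using FS.subspace_add[OF K2s xy] .
    moreover have "(\<lambda>ya. (x + y) (i, ya)) = (\<lambda>ya. x (i, ya)) + (\<lambda>ya. y (i, ya))" by (simp add: fun_eq_iff)
    ultimately show "(if x + y \<in> K2 r v then \<phi> (\<lambda>ya. (x + y) (i, ya)) else 0) =
      (if x \<in> K2 r v then \<phi> (\<lambda>y. x (i, y)) else 0) + (if y \<in> K2 r v then \<phi> (\<lambda>ya. y (i, ya)) else 0)"
      using xy sl dual_add[OF assms(1)] by simp
  next
    fix c x assume x: "x \<in> K2 r v"
    have "fscale c x \<in> K2 r v" using FS.subspace_scale[OF K2s x] .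
    moreover have "(\<lambda>ya. (fscale c x) (i, ya)) = fscale c (\<lambda>ya. x (i, ya))" by (simp add: fun_eq_iff)
    ultimately show "(if fscale c x \<in> K2 r v then \<phi> (\<lambda>y. fscale c x (i, y)) else 0) =
      c * (if x \<in> K2 r v then \<phi> (\<lambda>y. x (i, y)) else 0)"
      using x sl dual_scale[OF assms(1)] by simp
  qed simp
qed

end


lemma genlin:
  fixes x :: "'p \<Rightarrow> 'a" and y :: "'p \<Rightarrow> ('b \<Rightarrow> 'k::field)"
  assumes "finite P" "fsubspace W" "\<And>p. p \<in> P \<Longrightarrow> y p \<in> W"
  shows "lin_on V W (\<lambda>\<phi>. \<Sum>p\<in>P. fscale (\<phi> (x p)) (y p))"
  unfolding lin_on_def
proof (intro conjI ballI allI)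
  fix \<phi> show "(\<Sum>p\<in>P. fscale (\<phi> (x p)) (y p)) \<in> W"
    using assms by (intro FS.subspace_sum[OF assms(2)] FS.subspace_scale[OF assms(2)]) auto
next
  fix \<phi> \<psi> :: "'a \<Rightarrow> 'k"
  show "(\<Sum>p\<in>P. fscale ((\<phi> + \<psi>) (x p)) (y p)) = (\<Sum>p\<in>P. fscale (\<phi> (x p)) (y p)) + (\<Sum>p\<in>P. fscale (\<psi> (x p)) (y p))"
    by (simp add: FS.scale_left_distrib sum.distrib)
next
  fix c and \<phi> :: "'a \<Rightarrow> 'k"
  show "(\<Sum>p\<in>P. fscale (fscale c \<phi> (x p)) (y p)) = fscale c (\<Sum>p\<in>P. fscale (\<phi> (x p)) (y p))"
    by (simp add: FS.scale_sum_right FS.scale_scale)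
qed

lemma psi_pullback: "psi d (pullback r \<alpha> M) t = (\<Sum>j<d. \<Sum>l<r. fscale (\<alpha> (gam j) l) (arr M l (slice t j)))"
  unfolding psi_def slice_def by simp

lemma sum_delta_nested:
  fixes f :: "nat \<Rightarrow> nat \<Rightarrow> 'b::comm_monoid_add"
  assumes "i < r"
  shows "(\<Sum>p\<in>{..<r} \<times> {..<d}. if i = fst p then f (fst p) (snd p) else 0) = (\<Sum>j<d. f i j)"
proof -
  have "(\<Sum>p\<in>{..<r} \<times> {..<d}. if i = fst p then f (fst p) (snd p) else 0)
      = (\<Sum>l<r. \<Sum>j<d. if i = l then f l j else 0)"
    by (simp add: sum.cartesian_product split_beta)
  also have "\<dots> = (\<Sum>l<r. if i = l then (\<Sum>j<d. f l j) else 0)" by (intro sum.cong refl) auto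
  also have "\<dots> = (\<Sum>j<d. f i j)" using assms by (simp add: sum.delta)
  finally show ?thesis .
qed

context
  fixes r d :: nat and v :: "(nat \<Rightarrow> 'k::field) set" and \<alpha> :: "(nat \<Rightarrow> 'k) \<Rightarrow> (nat \<Rightarrow> 'k)"
  assumes v: "fsubspace v" "v \<subseteq> arrsp r" and al: "inj_arr d r \<alpha>" "\<alpha> ` arrsp d = v" and d1: "1 \<le> d"
begin

lemma arrE_P:
  assumes \<phi>: "\<phi> \<in> dual_sp (K1 r v)" and i: "i < r" and l: "l < r" and j: "j < d"
  shows "arr (Erep r v) i \<phi> (Pm r v (injl l (beta \<alpha> j)))
     = (if i = l then \<phi> (beta \<alpha> j) else 0) - \<alpha> (gam j) l * \<phi> (slice (Wv r v) i)"
proof -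
  let ?G = "injl l (beta \<alpha> j)"
  have bK: "beta \<alpha> j \<in> K1 r v" by (rule beta_K1[OF v al d1 j])
  have G: "?G \<in> tensor_sp r (K1 r v)" by (rule injl_tensor[OF K1s[OF v al d1] l bK])
  have PG: "Pm r v ?G \<in> K2 r v" by (rule P_K2[OF v al d1 G])
  have "arr (Erep r v) i \<phi> (Pm r v ?G) = \<phi> (slice (Pm r v ?G) i)"
    unfolding Erep_simps slice_def using PG by simp
  also have "slice (Pm r v ?G) i = (if i = l then beta \<alpha> j else 0) - fscale (\<alpha> (gam j) l) (slice (Wv r v) i)"
    unfolding slice_P[OF v al d1] slice_injl lam_injl[OF l] beta_apply[OF v al d1] by simp
  also have "\<phi> \<dots> = \<phi> (if i = l then beta \<alpha> j else 0) - \<phi> (fscale (\<alpha> (gam j) l) (slice (Wv r v) i))"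
  proof (rule dual_diff[OF \<phi> K1s[OF v al d1]])
    show "(if i = l then beta \<alpha> j else 0) \<in> K1 r v" using bK FS.subspace_0[OF K1s[OF v al d1]] by simp
    show "fscale (\<alpha> (gam j) l) (slice (Wv r v) i) \<in> K1 r v"
      using W_slice[OF v al d1 i] FS.subspace_scale[OF K1s[OF v al d1]] by blast
  qed
  also have "\<dots> = (if i = l then \<phi> (beta \<alpha> j) else 0) - \<alpha> (gam j) l * \<phi> (slice (Wv r v) i)"
    using dual_scale[OF \<phi> W_slice[OF v al d1 i]] dual_zero[OF \<phi> K1s[OF v al d1]] by simp
  finally show ?thesis .
qed

lemma nonzero_hom:
  fixes M :: "('i, 'j, 'k) krep"
  assumes M: "is_rep r M" and t: "t \<in> tensor_sp d (sp1 M)" "t \<noteq> 0" "psi d (pullback r \<alpha> M) t = 0"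
  shows "\<not> hom_zero r (Erep r v) M"
proof -
  have LM: "\<forall>i<r. lin_on (sp1 M) (sp2 M) (arr M i)" and s1: "fsubspace (sp1 M)" and s2: "fsubspace (sp2 M)"
    using M fin_dim_sub unfolding is_rep_def by auto
  have tj: "slice t j \<in> sp1 M" if "j < d" for j using tensor_slice[OF t(1) that] .
  define Q where "Q = {..<r} \<times> {..<d}"
  define f1 where "f1 \<phi> = (\<Sum>j<d. fscale (\<phi> (beta \<alpha> j)) (slice t j))" for \<phi> :: "(nat \<times> unit \<Rightarrow> 'k) \<Rightarrow> 'k"
  define f2 where "f2 \<Phi> = (\<Sum>p\<in>Q. fscale (\<Phi> (Pm r v (injl (fst p) (beta \<alpha> (snd p)))))
      (arr M (fst p) (slice t (snd p))))" for \<Phi> :: "(nat \<times> (nat \<times> unit) \<Rightarrow> 'k) \<Rightarrow> 'k"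
  have lin1: "lin_on (dual_sp (K1 r v)) (sp1 M) f1"
    unfolding f1_def by (rule genlin[OF _ s1]) (auto intro: tj)
  have lin2: "lin_on (dual_sp (K2 r v)) (sp2 M) f2"
    unfolding f2_def Q_def by (rule genlin[OF _ s2]) (auto intro!: lin_on_in[of "sp1 M" "sp2 M"] tj simp: LM)
  have harr: "f2 (arr (Erep r v) i \<phi>) = arr M i (f1 \<phi>)" if i: "i < r" and \<phi>: "\<phi> \<in> dual_sp (K1 r v)" for i \<phi>
  proof -
    let ?X = "\<lambda>p. arr M (fst p) (slice t (snd p))"
    have "f2 (arr (Erep r v) i \<phi>) = (\<Sum>p\<in>Q. fscale ((if i = fst p then \<phi> (beta \<alpha> (snd p)) else 0)
        - \<alpha> (gam (snd p)) (fst p) * \<phi> (slice (Wv r v) i)) (?X p))"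
      unfolding f2_def Q_def by (intro sum.cong refl) (auto simp: arrE_P[OF \<phi> i])
    also have "\<dots> = (\<Sum>p\<in>Q. fscale (if i = fst p then \<phi> (beta \<alpha> (snd p)) else 0) (?X p))
        - fscale (\<phi> (slice (Wv r v) i)) (\<Sum>p\<in>Q. fscale (\<alpha> (gam (snd p)) (fst p)) (?X p))"
      by (simp add: FS.scale_left_diff_distrib sum_subtractf FS.scale_sum_right FS.scale_scale mult.commute)
    also have "(\<Sum>p\<in>Q. fscale (\<alpha> (gam (snd p)) (fst p)) (?X p)) = psi d (pullback r \<alpha> M) t"
    proof -
      have "(\<Sum>p\<in>Q. fscale (\<alpha> (gam (snd p)) (fst p)) (?X p)) = (\<Sum>l<r. \<Sum>j<d. fscale (\<alpha> (gam j) l) (arr M l (slice t j)))"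
        unfolding Q_def by (simp add: sum.cartesian_product split_beta)
      also have "\<dots> = psi d (pullback r \<alpha> M) t" unfolding psi_pullback by (rule sum.swap)
      finally show ?thesis .
    qed
    also have "(\<Sum>p\<in>Q. fscale (if i = fst p then \<phi> (beta \<alpha> (snd p)) else 0) (?X p))
        = (\<Sum>p\<in>Q. if i = fst p then fscale (\<phi> (beta \<alpha> (snd p))) (arr M (fst p) (slice t (snd p))) else 0)"
      by (intro sum.cong refl) auto
    also have "\<dots> = (\<Sum>j<d. fscale (\<phi> (beta \<alpha> j)) (arr M i (slice t j)))"
      unfolding Q_def by (rule sum_delta_nested[OF i])
    also have "\<dots> = arr M i (f1 \<phi>)"
    proof -
      have li: "lin_on (sp1 M) (sp2 M) (arr M i)" using LM i by blast
      have "arr M i (f1 \<phi>) = (\<Sum>j<d. arr M i (fscale (\<phi> (beta \<alpha> j)) (slice t j)))"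
        unfolding f1_def by (rule lin_on_sum[OF li s1]) (auto intro: FS.subspace_scale[OF s1] tj)
      also have "\<dots> = (\<Sum>j<d. fscale (\<phi> (beta \<alpha> j)) (arr M i (slice t j)))"
        by (intro sum.cong refl lin_on_scale[OF li] tj) simp
      finally show ?thesis by simp
    qed
    finally show ?thesis using t(3) by simp
  qed
  have hom: "is_hom r (Erep r v) M f1 f2"
    unfolding is_hom_def Erep_simps(1,2) using lin1 lin2 harr by (simp add: Erep_simps(1))
  obtain p0 where p0: "t p0 \<noteq> 0" using t(2) by (auto simp: fun_eq_iff)
  obtain j0 x0 where jx: "p0 = (j0, x0)" by (cases p0)
  have j0: "j0 < d" using t(1) p0 jx unfolding tensor_sp_iff by (meson not_less)
  have "f1 (delta r d v \<alpha> j0) = (\<Sum>j<d. if j0 = j then slice t j else 0)"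
    unfolding f1_def by (intro sum.cong refl) (simp add: delta_beta[OF v al d1 j0])
  also have "\<dots> = slice t j0" using j0 by simp
  finally have "f1 (delta r d v \<alpha> j0) x0 \<noteq> 0" using p0 jx by (simp add: slice_def)
  then have "f1 (delta r d v \<alpha> j0) \<noteq> 0" by auto
  moreover have "delta r d v \<alpha> j0 \<in> sp1 (Erep r v)" unfolding Erep_simps by (rule delta_dual[OF v al d1])
  ultimately show ?thesis using hom unfolding hom_zero_def by blast
qed

end


context
  fixes r d :: nat and v :: "(nat \<Rightarrow> 'k::field) set" and \<alpha> :: "(nat \<Rightarrow> 'k) \<Rightarrow> (nat \<Rightarrow> 'k)"
  assumes v: "fsubspace v" "v \<subseteq> arrsp r" and al: "inj_arr d r \<alpha>" "\<alpha> ` arrsp d = v" and d1: "1 \<le> d"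
begin

lemma dual_K1_expand:
  assumes \<phi>: "\<phi> \<in> dual_sp (K1 r v)"
  shows "\<phi> = (\<Sum>j<d. fscale (\<phi> (beta \<alpha> j)) (delta r d v \<alpha> j))"
proof
  fix x
  show "\<phi> x = (\<Sum>j<d. fscale (\<phi> (beta \<alpha> j)) (delta r d v \<alpha> j)) x"
  proof (cases "x \<in> K1 r v")
    case True
    have "\<phi> x = \<phi> (\<Sum>j<d. fscale (delta r d v \<alpha> j x) (beta \<alpha> j))"
      using K1_expand[OF v al d1 True] by metis
    also have "\<dots> = (\<Sum>j<d. \<phi> (fscale (delta r d v \<alpha> j x) (beta \<alpha> j)))"
      by (rule dual_sum[OF \<phi> K1s[OF v al d1]])
        (auto intro: FS.subspace_scale[OF K1s[OF v al d1]] beta_K1[OF v al d1])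
    also have "\<dots> = (\<Sum>j<d. delta r d v \<alpha> j x * \<phi> (beta \<alpha> j))"
      by (intro sum.cong refl dual_scale[OF \<phi>] beta_K1[OF v al d1]) simp
    also have "\<dots> = (\<Sum>j<d. fscale (\<phi> (beta \<alpha> j)) (delta r d v \<alpha> j)) x"
      by (simp add: sum_fun_apply mult.commute)
    finally show ?thesis .
  next
    case False
    then show ?thesis using dual_out[OF \<phi> False] by (simp add: sum_fun_apply delta_def)
  qed
qed

lemma hom_zero_if:
  fixes M :: "('i, 'j, 'k) krep"
  assumes M: "is_rep r M"
    and inj: "\<forall>t\<in>tensor_sp d (sp1 M). psi d (pullback r \<alpha> M) t = 0 \<longrightarrow> t = 0"
  shows "hom_zero r (Erep r v) M"
  unfolding hom_zero_def
proof (intro allI impI)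
  fix f1 f2 assume hom: "is_hom r (Erep r v) M f1 f2"
  have LM: "\<forall>i<r. lin_on (sp1 M) (sp2 M) (arr M i)" and s1: "fsubspace (sp1 M)" and s2: "fsubspace (sp2 M)"
    using M fin_dim_sub unfolding is_rep_def by auto
  have l1: "lin_on (dual_sp (K1 r v)) (sp1 M) f1" and l2: "lin_on (dual_sp (K2 r v)) (sp2 M) f2"
    and harr: "\<forall>i<r. \<forall>\<phi>\<in>dual_sp (K1 r v). f2 (arr (Erep r v) i \<phi>) = arr M i (f1 \<phi>)"
    using hom unfolding is_hom_def Erep_simps by auto
  have D1: "fsubspace (dual_sp (K1 r v))" by (rule subspace_dual)
  have dl: "delta r d v \<alpha> j \<in> dual_sp (K1 r v)" for j by (rule delta_dual[OF v al d1])
  define t where "t = (\<lambda>(j, y). if j < d then f1 (delta r d v \<alpha> j) y else 0)"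
  have st: "slice t j = f1 (delta r d v \<alpha> j)" if "j < d" for j
    using that unfolding t_def slice_def by auto
  have tT: "t \<in> tensor_sp d (sp1 M)" unfolding tensor_sp_iff
    using st lin_on_in[OF l1 dl] by (auto simp: t_def slice_def)
  define \<pi> where "\<pi> i = (\<Sum>j<d. fscale (\<alpha> (gam j) i) (delta r d v \<alpha> j))" for i
  have \<pi>d: "\<pi> i \<in> dual_sp (K1 r v)" for i unfolding \<pi>_def
    by (intro FS.subspace_sum[OF D1] FS.subspace_scale[OF D1] dl)
  have f1\<pi>: "f1 (\<pi> i) = (\<Sum>j<d. fscale (\<alpha> (gam j) i) (f1 (delta r d v \<alpha> j)))" for i
  proof -
    have "f1 (\<pi> i) = (\<Sum>j<d. f1 (fscale (\<alpha> (gam j) i) (delta r d v \<alpha> j)))"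
      unfolding \<pi>_def by (rule lin_on_sum[OF l1 D1]) (auto intro: FS.subspace_scale[OF D1] dl)
    also have "\<dots> = (\<Sum>j<d. fscale (\<alpha> (gam j) i) (f1 (delta r d v \<alpha> j)))"
      by (intro sum.cong refl lin_on_scale[OF l1] dl)
    finally show ?thesis .
  qed
  have sum0: "(\<Sum>i<r. arr (Erep r v) i (\<pi> i)) = 0"
  proof
    fix F
    show "(\<Sum>i<r. arr (Erep r v) i (\<pi> i)) F = 0 F"
    proof (cases "F \<in> K2 r v")
      case True
      have Fs: "(\<lambda>y. F (i, y)) \<in> K1 r v" if "i < r" for i
        using True that unfolding K2_def2 tensor_sp_iff by blast
      have "(\<Sum>i<r. arr (Erep r v) i (\<pi> i)) F = (\<Sum>i<r. \<pi> i (\<lambda>y. F (i, y)))"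
        using True by (simp add: sum_fun_apply Erep_simps)
      also have "\<dots> = (\<Sum>i<r. (\<lambda>y. F (i, y)) (i, ()))"
      proof (intro sum.cong refl)
        fix i assume "i \<in> {..<r}"
        then have "(\<lambda>y. F (i, y)) (i, ()) = (\<Sum>j<d. \<alpha> (gam j) i * delta r d v \<alpha> j (\<lambda>y. F (i, y)))"
          using K1_coord[OF v al d1 Fs] by simp
        then show "\<pi> i (\<lambda>y. F (i, y)) = (\<lambda>y. F (i, y)) (i, ())"
          unfolding \<pi>_def by (simp add: sum_fun_apply)
      qed
      also have "\<dots> = lam r F" unfolding lam_def by simp
      also have "\<dots> = 0" using True unfolding K2_def2 by simp
      finally show ?thesis by simp
    next
      case False then show ?thesis by (simp add: sum_fun_apply Erep_simps)
    qed
  qed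
  have "psi d (pullback r \<alpha> M) t = (\<Sum>l<r. \<Sum>j<d. fscale (\<alpha> (gam j) l) (arr M l (f1 (delta r d v \<alpha> j))))"
    unfolding psi_pullback using st by (subst sum.swap) simp
  also have "\<dots> = (\<Sum>l<r. arr M l (f1 (\<pi> l)))"
  proof (intro sum.cong refl)
    fix l assume l: "l \<in> {..<r}"
    have li: "lin_on (sp1 M) (sp2 M) (arr M l)" using LM l by blast
    have in1: "f1 (delta r d v \<alpha> j) \<in> sp1 M" for j using lin_on_in[OF l1 dl] .
    have "arr M l (f1 (\<pi> l)) = (\<Sum>j<d. arr M l (fscale (\<alpha> (gam j) l) (f1 (delta r d v \<alpha> j))))"
      unfolding f1\<pi> by (rule lin_on_sum[OF li s1]) (auto intro: FS.subspace_scale[OF s1] in1)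
    also have "\<dots> = (\<Sum>j<d. fscale (\<alpha> (gam j) l) (arr M l (f1 (delta r d v \<alpha> j))))"
      by (intro sum.cong refl lin_on_scale[OF li] in1)
    finally show "(\<Sum>j<d. fscale (\<alpha> (gam j) l) (arr M l (f1 (delta r d v \<alpha> j)))) = arr M l (f1 (\<pi> l))"
      by simp
  qed
  also have "\<dots> = (\<Sum>l<r. f2 (arr (Erep r v) l (\<pi> l)))" using harr \<pi>d by simp
  also have "\<dots> = f2 (\<Sum>l<r. arr (Erep r v) l (\<pi> l))"
    by (rule lin_on_sum[OF l2 subspace_dual, symmetric]) (auto intro: arrE_dual[OF v al d1] \<pi>d)
  also have "\<dots> = 0" unfolding sum0 by (rule lin_on_0[OF l2 subspace_dual])
  finally have "t = 0" using inj tT by blast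
  then have z1: "f1 (delta r d v \<alpha> j) = 0" if "j < d" for j using st[OF that] by (simp add: slice_def fun_eq_iff)
  have F1: "f1 \<phi> = 0" if \<phi>: "\<phi> \<in> dual_sp (K1 r v)" for \<phi>
  proof -
    have "f1 \<phi> = f1 (\<Sum>j<d. fscale (\<phi> (beta \<alpha> j)) (delta r d v \<alpha> j))" using dual_K1_expand[OF \<phi>] by metis
    also have "\<dots> = (\<Sum>j<d. f1 (fscale (\<phi> (beta \<alpha> j)) (delta r d v \<alpha> j)))"
      by (rule lin_on_sum[OF l1 D1]) (auto intro: FS.subspace_scale[OF D1] dl)
    also have "\<dots> = (\<Sum>j<d. fscale (\<phi> (beta \<alpha> j)) (f1 (delta r d v \<alpha> j)))"
      by (intro sum.cong refl lin_on_scale[OF l1] dl)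
    also have "\<dots> = 0" using z1 by simp
    finally show ?thesis .
  qed
  have F2: "f2 \<Phi> = 0" if \<Phi>: "\<Phi> \<in> dual_sp (K2 r v)" for \<Phi>
  proof -
    define \<psi> where "\<psi> i x = (if x \<in> K1 r v then \<Phi> (Pm r v (injl i x)) else 0)" for i x
    have \<psi>d: "\<psi> i \<in> dual_sp (K1 r v)" if i: "i < r" for i
    proof (rule dualI)
      fix x y assume xy: "x \<in> K1 r v" "y \<in> K1 r v"
      have s: "x + y \<in> K1 r v" using FS.subspace_add[OF K1s[OF v al d1] xy] .
      have k: "Pm r v (injl i x) \<in> K2 r v" "Pm r v (injl i y) \<in> K2 r v"
        using P_K2[OF v al d1] injl_tensor[OF K1s[OF v al d1] i] xy by blast+
      show "\<psi> i (x + y) = \<psi> i x + \<psi> i y"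
        unfolding \<psi>_def using s xy P_add[OF v al d1] dual_add[OF \<Phi> k] by (simp add: injl_add)
    next
      fix c x assume x: "x \<in> K1 r v"
      have s: "fscale c x \<in> K1 r v" using FS.subspace_scale[OF K1s[OF v al d1] x] .
      have k: "Pm r v (injl i x) \<in> K2 r v" using P_K2[OF v al d1] injl_tensor[OF K1s[OF v al d1] i] x by blast
      show "\<psi> i (fscale c x) = c * \<psi> i x"
        unfolding \<psi>_def using s x P_scale[OF v al d1] dual_scale[OF \<Phi> k] by (simp add: injl_scale)
    next
      fix x assume "x \<notin> K1 r v" then show "\<psi> i x = 0" unfolding \<psi>_def by simp
    qed
    have dec: "\<Phi> = (\<Sum>i<r. arr (Erep r v) i (\<psi> i))"
    proof
      fix F
      show "\<Phi> F = (\<Sum>i<r. arr (Erep r v) i (\<psi> i)) F"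
      proof (cases "F \<in> K2 r v")
        case True
        have FT: "F \<in> tensor_sp r (K1 r v)" using True unfolding K2_def2 by blast
        have Fs: "slice F i \<in> K1 r v" if "i < r" for i using tensor_slice[OF FT that] .
        have inK2: "Pm r v (injl i (slice F i)) \<in> K2 r v" if "i < r" for i
          using P_K2[OF v al d1] injl_tensor[OF K1s[OF v al d1] that Fs[OF that]] by blast
        have "(\<Sum>i<r. arr (Erep r v) i (\<psi> i)) F = (\<Sum>i<r. \<Phi> (Pm r v (injl i (slice F i))))"
          using True Fs by (simp add: sum_fun_apply Erep_simps \<psi>_def slice_def)
        also have "\<dots> = \<Phi> (\<Sum>i<r. Pm r v (injl i (slice F i)))"
          by (rule dual_sum[OF \<Phi> K2s[OF v al d1], symmetric]) (use inK2 in blast)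
        also have "\<dots> = \<Phi> (Pm r v (\<Sum>i<r. injl i (slice F i)))" by (simp only: P_sum[OF v al d1])
        also have "\<dots> = \<Phi> F" using sum_injl[OF FT] P_id[OF v al d1 True] by simp
        finally show ?thesis by simp
      next
        case False then show ?thesis using dual_out[OF \<Phi> False] by (simp add: sum_fun_apply Erep_simps)
      qed
    qed
    have "f2 \<Phi> = (\<Sum>i<r. f2 (arr (Erep r v) i (\<psi> i)))"
      by (subst dec, rule lin_on_sum[OF l2 subspace_dual]) (auto intro: arrE_dual[OF v al d1] \<psi>d)
    also have "\<dots> = (\<Sum>i<r. arr M i (f1 (\<psi> i)))" using harr \<psi>d by simp
    also have "\<dots> = (\<Sum>i<r. arr M i 0)" using F1 \<psi>d by simp
    also have "\<dots> = 0"
    proof (rule sum.neutral, intro ballI)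
      fix i assume "i \<in> {..<r}"
      then have "lin_on (sp1 M) (sp2 M) (arr M i)" using LM by simp
      then show "arr M i 0 = 0" by (rule lin_on_0[OF _ s1])
    qed
    finally show ?thesis .
  qed
  show "(\<forall>x\<in>sp1 (Erep r v). f1 x = 0) \<and> (\<forall>y\<in>sp2 (Erep r v). f2 y = 0)"
    unfolding Erep_simps using F1 F2 by blast
qed

end


theorem theorem2p1p5:
  fixes M :: "('i, 'j, 'k::field) krep"
    and v :: "(nat \<Rightarrow> 'k) set"
    and r d :: nat
  assumes "alg_closed TYPE('k)"
    and "2 \<le> r" and "1 \<le> d" and "d \<le> r - 1"
    and "is_rep r M"
    and "v \<in> Gr d r"
  defines "S1 \<equiv> hom_zero r (Erep r v) M"
    and "S2 \<equiv> (\<forall>\<alpha>. inj_arr d r \<alpha> \<and> \<alpha> ` arrsp d = v \<longrightarrow> psi_injective d (pullback r \<alpha> M))"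
    and "S3 \<equiv> (\<exists>\<alpha>. inj_arr d r \<alpha> \<and> \<alpha> ` arrsp d = v \<and> psi_injective d (pullback r \<alpha> M))"
    and "S4 \<equiv> (\<exists>\<alpha>. inj_arr d r \<alpha> \<and> \<alpha> ` arrsp d = v \<and>
               (\<exists>a::nat. int a = Delta M d \<and>
                  is_iso d (pullback r \<alpha> M) (dsum (mult_rep a P0) (mult_rep (fdim (sp1 M)) (P1 d)))))"
    and "S5 \<equiv> v \<notin> rank_variety r d M"
  shows "(S1 \<longleftrightarrow> S2) \<and> (S2 \<longleftrightarrow> S3) \<and> (S3 \<longleftrightarrow> S4) \<and> (S4 \<longleftrightarrow> S5)"
proof -
  have d1: "1 \<le> d" and M: "is_rep r M" and vG: "v \<in> Gr d r" using assms by auto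
  have v: "fsubspace v" "v \<subseteq> arrsp r" using vG unfolding Gr_def by auto
  have pbrep: "is_rep d (pullback r \<alpha> M)" for \<alpha> by (rule is_rep_pullback[OF M])
  have KEY: "S1 \<longleftrightarrow> psi_injective d (pullback r \<alpha> M)" if al: "inj_arr d r \<alpha>" "\<alpha> ` arrsp d = v" for \<alpha>
  proof
    assume S1: S1
    show "psi_injective d (pullback r \<alpha> M)"
      unfolding psi_injective_iff[OF pbrep]
    proof (intro ballI impI)
      fix t assume t: "t \<in> tensor_sp d (sp1 (pullback r \<alpha> M))" "psi d (pullback r \<alpha> M) t = 0"
      show "t = 0"
      proof (rule ccontr)
        assume "t \<noteq> 0"
        then have "\<not> hom_zero r (Erep r v) M"
          using nonzero_hom[OF v al d1 M] t by simp
        then show False using S1 unfolding S1_def by simp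
      qed
    qed
  next
    assume "psi_injective d (pullback r \<alpha> M)"
    then have "\<forall>t\<in>tensor_sp d (sp1 M). psi d (pullback r \<alpha> M) t = 0 \<longrightarrow> t = 0"
      unfolding psi_injective_iff[OF pbrep] by simp
    then show S1 unfolding S1_def by (rule hom_zero_if[OF v al d1 M])
  qed
  obtain \<alpha>0 where a0: "inj_arr d r \<alpha>0" "\<alpha>0 ` arrsp d = v" using alpha_exists[OF vG] by blast
  have S12: "S1 \<longleftrightarrow> S2" unfolding S2_def using KEY a0 by blast
  have S23: "S2 \<longleftrightarrow> S3" unfolding S2_def S3_def using KEY a0 by blast
  have S34: "S3 \<longleftrightarrow> S4"
  proof
    assume S3
    then obtain \<alpha> where al: "inj_arr d r \<alpha>" "\<alpha> ` arrsp d = v" "psi_injective d (pullback r \<alpha> M)"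
      unfolding S3_def by blast
    obtain a where a: "int a = int (fdim (sp2 (pullback r \<alpha> M))) - int d * int (fdim (sp1 (pullback r \<alpha> M)))"
      "is_iso d (pullback r \<alpha> M) (Fr a (fdim (sp1 (pullback r \<alpha> M))) d)"
      using psi_injective_iso[OF pbrep al(3)] by blast
    have "int a = Delta M d" using a(1) unfolding Delta_def by simp
    then show S4 unfolding S4_def using al a(2) by auto
  next
    assume S4
    then obtain \<alpha> a where al: "inj_arr d r \<alpha>" "\<alpha> ` arrsp d = v"
      "is_iso d (pullback r \<alpha> M) (Fr a (fdim (sp1 M)) d)"
      unfolding S4_def by blast
    then have "psi_injective d (pullback r \<alpha> M)" using iso_psi_injective[OF pbrep] by blast
    then show S3 unfolding S3_def using al by blast
  qed
  have S52: "S5 \<longleftrightarrow> S2"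
    unfolding S5_def S2_def rank_variety_def using vG projective_iff[OF pbrep] by blast
  show ?thesis using S12 S23 S34 S52 by blast
qed

end
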